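(* Let $g\in\mathcal{H}(\mathbb{D})$ and $\beta,\gamma>0$. Let $T_gf(z)=\int_0^z f(w)g'(w)\,dw$, $C_gf(z)=\frac1z\int_0^z f(w)g'(w)\,dw$ for $z\neq0$, $C_gf(0)=0$, and $M_{g'}f=g'f$. (a) The following are equivalent: (i) $C_g:H_\gamma\to H_\beta$ is bounded; (ii) $T_g:H_\gamma\to H_\beta$ is bounded; (iii) $M_{g'}:H_\gamma\to H_{\beta+1}$ is bounded; (iv) $\sup_{z\in\mathbb{D}}(1-|z|^2)^{\beta+1-\gamma}|g'(z)|<\infty$. When $\gamma=\beta$, (iv) is equivalent to $g\in\mathcal{B}$, the Bloch space $\mathcal{B}_1$. (b) Let $\delta_z$ denote the point evaluation functional $f\mapsto f(z)$ on $\mathcal{B}_\gamma$. The following are equivalent: (i) $C_g:\mathcal{B}_\gamma\to\mathcal{B}_\beta$ is bounded; (ii) $T_g:\mathcal{B}_\gamma\to\mathcal{B}_\beta$ is bounded; (iii) $M_{g'}:\mathcal{B}_\gamma\to H_\beta$ is bounded; (iv) $\sup_{z\in\mathbb{D}}(1-|z|^2)^\beta\|\delta_z\|\,|g'(z)|<\infty$. In particular, when $\gamma=\beta$, (iv) is equivalent to $g\in\mathcal{B}_\beta$ if $0<\beta<1$, to $g\in\mathrm{Log}\mathcal{B}$ if $\beta=1$, and to $g\in\mathcal{B}$ if $\beta>1$.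
   Context: $\mathbb{D}$ is the unit disk, $\mathcal{H}(\mathbb{D})$ its holomorphic functions. For $\gamma>0$, $H_\gamma=\{f\in\mathcal{H}(\mathbb{D}):\sup_z(1-|z|^2)^\gamma|f(z)|<\infty\}$ with that supremum as norm, and $\mathcal{B}_\gamma=\{f\in\mathcal{H}(\mathbb{D}):\sup_z(1-|z|^2)^\gamma|f'(z)|<\infty\}$ with norm $|f(0)|+\sup_z(1-|z|^2)^\gamma|f'(z)|$; $\mathcal{B}=\mathcal{B}_1$ is the Bloch space. $\mathrm{Log}\mathcal{B}$ is the set of $f\in\mathcal{H}(\mathbb{D})$ with $\sup_z(1-|z|^2)\log\frac{1}{1-|z|^2}|f'(z)|<\infty$. *)

theory Defs
  imports "HOL-Complex_Analysis.Complex_Analysis"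
begin

definition growth_space :: "real \<Rightarrow> (complex \<Rightarrow> complex) set" where
  "growth_space \<gamma> = {f. f holomorphic_on ball 0 1 \<and>
     (\<exists>C. \<forall>z\<in>ball 0 1. (1 - (cmod z)^2) powr \<gamma> * cmod (f z) \<le> C)}"

definition growth_norm :: "real \<Rightarrow> (complex \<Rightarrow> complex) \<Rightarrow> real" where
  "growth_norm \<gamma> f = (SUP z\<in>ball 0 1. (1 - (cmod z)^2) powr \<gamma> * cmod (f z))"

definition bloch_type :: "real \<Rightarrow> (complex \<Rightarrow> complex) set" where
  "bloch_type \<gamma> = {f. f holomorphic_on ball 0 1 \<and>
     (\<exists>C. \<forall>z\<in>ball 0 1. (1 - (cmod z)^2) powr \<gamma> * cmod (deriv f z) \<le> C)}"

definition bloch_norm :: "real \<Rightarrow> (complex \<Rightarrow> complex) \<Rightarrow> real" where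
  "bloch_norm \<gamma> f = cmod (f 0) + (SUP z\<in>ball 0 1. (1 - (cmod z)^2) powr \<gamma> * cmod (deriv f z))"

definition bloch :: "(complex \<Rightarrow> complex) set" where
  "bloch = bloch_type 1"

definition log_bloch :: "(complex \<Rightarrow> complex) set" where
  "log_bloch = {f. f holomorphic_on ball 0 1 \<and>
     (\<exists>C. \<forall>z\<in>ball 0 1. (1 - (cmod z)^2) * ln (1 / (1 - (cmod z)^2)) * cmod (deriv f z) \<le> C)}"

definition point_eval_norm :: "real \<Rightarrow> complex \<Rightarrow> real" where
  "point_eval_norm \<gamma> z = (SUP f\<in>{f \<in> bloch_type \<gamma>. bloch_norm \<gamma> f \<le> 1}. cmod (f z))"

definition bounded_op ::
  "('a set) \<Rightarrow> ('a \<Rightarrow> real) \<Rightarrow> ('b set) \<Rightarrow> ('b \<Rightarrow> real) \<Rightarrow> ('a \<Rightarrow> 'b) \<Rightarrow> bool" where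
  "bounded_op X nX Y nY T \<longleftrightarrow> (\<forall>f\<in>X. T f \<in> Y) \<and> (\<exists>C. \<forall>f\<in>X. nY (T f) \<le> C * nX f)"

definition T_op :: "(complex \<Rightarrow> complex) \<Rightarrow> (complex \<Rightarrow> complex) \<Rightarrow> complex \<Rightarrow> complex" where
  "T_op g f z = contour_integral (linepath 0 z) (\<lambda>w. f w * deriv g w)"

definition C_op :: "(complex \<Rightarrow> complex) \<Rightarrow> (complex \<Rightarrow> complex) \<Rightarrow> complex \<Rightarrow> complex" where
  "C_op g f z = (if z = 0 then f 0 * deriv g 0 else T_op g f z / z)"

definition M_op :: "(complex \<Rightarrow> complex) \<Rightarrow> (complex \<Rightarrow> complex) \<Rightarrow> complex \<Rightarrow> complex" where
  "M_op g f z = deriv g z * f z"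

end

theory Submission
  imports Defs
begin


abbreviation wt :: "complex \<Rightarrow> real" where "wt z \<equiv> 1 - (cmod z)^2"

lemma wt_pos: "z \<in> ball 0 1 \<Longrightarrow> 0 < wt z"
proof -
  assume "z \<in> ball 0 1" then have "cmod z < 1" by simp
  then have "(cmod z)^2 < 1" by (simp add: abs_square_less_1)
  then show ?thesis by simp
qed

lemma wt_le1: "wt z \<le> 1" by simp

lemma wt_ge: "z \<in> ball 0 1 \<Longrightarrow> 1 - cmod z \<le> wt z"
proof -
  assume "z \<in> ball 0 1" then have "cmod z < 1" by simp
  then have "(cmod z)^2 \<le> cmod z" by (simp add: power2_eq_square mult_le_cancel_left1 less_imp_le mult_left_le_one_le)
  then show ?thesis by simp
qed

lemma wt_le2: "z \<in> ball 0 1 \<Longrightarrow> wt z \<le> 2 * (1 - cmod z)"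
proof -
  assume "z \<in> ball 0 1" then have "cmod z < 1" by simp
  have "wt z = (1 - cmod z) * (1 + cmod z)" by (simp add: power2_eq_square algebra_simps)
  also have "\<dots> \<le> (1 - cmod z) * 2" using \<open>cmod z < 1\<close> by (intro mult_left_mono) auto
  finally show ?thesis by simp
qed

lemma wt_mono: "cmod u \<le> cmod z \<Longrightarrow> wt z \<le> wt u"
  by (simp add: power_mono)

lemma ball_ne: "ball (0::complex) 1 \<noteq> {}" by simp

lemma gs_bdd: "f \<in> growth_space \<gamma> \<Longrightarrow> bdd_above ((\<lambda>z. wt z powr \<gamma> * cmod (f z)) ` ball 0 1)"
  unfolding growth_space_def by (auto intro: bdd_aboveI2)

lemma gn_upper: "f \<in> growth_space \<gamma> \<Longrightarrow> z \<in> ball 0 1 \<Longrightarrow> wt z powr \<gamma> * cmod (f z) \<le> growth_norm \<gamma> f"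
  unfolding growth_norm_def by (rule cSUP_upper[OF _ gs_bdd])

lemma gn_least: "(\<And>z. z \<in> ball 0 1 \<Longrightarrow> wt z powr \<gamma> * cmod (f z) \<le> B) \<Longrightarrow> growth_norm \<gamma> f \<le> B"
  unfolding growth_norm_def by (rule cSUP_least[OF ball_ne])

lemma gn_nonneg: "f \<in> growth_space \<gamma> \<Longrightarrow> 0 \<le> growth_norm \<gamma> f"
  using gn_upper[of f \<gamma> 0] by (simp add: order_trans[OF norm_ge_zero])

lemma gs_intro: "f holomorphic_on ball 0 1 \<Longrightarrow> (\<And>z. z \<in> ball 0 1 \<Longrightarrow> wt z powr \<gamma> * cmod (f z) \<le> B) \<Longrightarrow> f \<in> growth_space \<gamma>"
  unfolding growth_space_def by blast

lemma gs_hol: "f \<in> growth_space \<gamma> \<Longrightarrow> f holomorphic_on ball 0 1"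
  unfolding growth_space_def by blast

lemma bt_bdd: "f \<in> bloch_type \<gamma> \<Longrightarrow> bdd_above ((\<lambda>z. wt z powr \<gamma> * cmod (deriv f z)) ` ball 0 1)"
  unfolding bloch_type_def by (auto intro: bdd_aboveI2)

lemma bn_upper: "f \<in> bloch_type \<gamma> \<Longrightarrow> z \<in> ball 0 1 \<Longrightarrow> wt z powr \<gamma> * cmod (deriv f z) \<le> bloch_norm \<gamma> f - cmod (f 0)"
  unfolding bloch_norm_def using cSUP_upper[OF _ bt_bdd] by simp

lemma bn_least: "(\<And>z. z \<in> ball 0 1 \<Longrightarrow> wt z powr \<gamma> * cmod (deriv f z) \<le> B) \<Longrightarrow> bloch_norm \<gamma> f \<le> cmod (f 0) + B"
proof -
  assume "\<And>z. z \<in> ball 0 1 \<Longrightarrow> wt z powr \<gamma> * cmod (deriv f z) \<le> B"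
  then have "(SUP z\<in>ball 0 1. wt z powr \<gamma> * cmod (deriv f z)) \<le> B" by (rule cSUP_least[OF ball_ne])
  then show ?thesis unfolding bloch_norm_def by simp
qed

lemma bn_f0: "f \<in> bloch_type \<gamma> \<Longrightarrow> cmod (f 0) \<le> bloch_norm \<gamma> f"
proof -
  assume a: "f \<in> bloch_type \<gamma>"
  have "0 \<le> wt 0 powr \<gamma> * cmod (deriv f 0)" by simp
  also have "\<dots> \<le> bloch_norm \<gamma> f - cmod (f 0)" by (rule bn_upper[OF a]) simp
  finally show ?thesis by simp
qed

lemma bn_nonneg: "f \<in> bloch_type \<gamma> \<Longrightarrow> 0 \<le> bloch_norm \<gamma> f"
  using bn_f0[of f \<gamma>] norm_ge_zero order_trans by blast

lemma bt_intro: "f holomorphic_on ball 0 1 \<Longrightarrow> (\<And>z. z \<in> ball 0 1 \<Longrightarrow> wt z powr \<gamma> * cmod (deriv f z) \<le> B) \<Longrightarrow> f \<in> bloch_type \<gamma>"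
  unfolding bloch_type_def by blast

lemma bt_hol: "f \<in> bloch_type \<gamma> \<Longrightarrow> f holomorphic_on ball 0 1"
  unfolding bloch_type_def by blast



lemma T_has_deriv:
  assumes hf: "f holomorphic_on ball 0 1" and hg: "g holomorphic_on ball 0 1" and z: "z \<in> ball 0 1"
  shows "(T_op g f has_field_derivative f z * deriv g z) (at z)"
proof -
  let ?S = "ball (0::complex) 1"
  let ?F = "\<lambda>w. f w * deriv g w"
  have holF: "?F holomorphic_on ?S"
    using hf hg by (intro holomorphic_intros holomorphic_deriv) auto
  have contf: "continuous_on ?S ?F" using holF holomorphic_on_imp_continuous_on by blast
  have a_cs: "closed_segment 0 x \<subseteq> ?S" if "x \<in> ?S" for x
    using that convex_ball[of "0::complex" 1] by (simp add: convex_contains_segment)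
  { fix x b c
    assume "x \<in> ?S" "closed_segment b c \<subseteq> ?S"
    then have "b \<in> ?S" "c \<in> ?S" by auto
    then have abcs: "convex hull {0, b, c} \<subseteq> ?S"
      by (intro hull_minimal) (auto simp: convex_ball)
    then have "continuous_on (convex hull {0, b, c}) ?F"
      by (simp add: continuous_on_subset [OF contf])
    moreover have "?F field_differentiable at x" if "x \<in> interior (convex hull {0, b, c}) - {}" for x
      using that abcs holF interior_subset
      by (meson Diff_iff holomorphic_on_imp_differentiable_at open_ball subsetD)
    ultimately have "(?F has_contour_integral 0) (linepath 0 b +++ linepath b c +++ linepath c 0)"
      by (intro Cauchy_theorem_triangle_cofinite[where S="{}"]) auto
  } note 0 = this
  have "((\<lambda>x. contour_integral (linepath 0 x) ?F) has_field_derivative ?F z) (at z)"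
  proof (rule triangle_contour_integrals_starlike_primitive[where S="?S"])
    fix b c assume "closed_segment b c \<subseteq> ?S"
    from 0[OF z this] show "contour_integral (linepath 0 b) ?F + contour_integral (linepath b c) ?F +
        contour_integral (linepath c 0) ?F = 0"
      by (rule has_chain_integral_chain_integral3)
  qed (use contf a_cs z in auto)
  then show ?thesis unfolding T_op_def[abs_def] .
qed

lemma T_hol: "f holomorphic_on ball 0 1 \<Longrightarrow> g holomorphic_on ball 0 1 \<Longrightarrow> T_op g f holomorphic_on ball 0 1"
  using T_has_deriv holomorphic_on_open open_ball by blast

lemma T_zero: "T_op g f 0 = 0" by (simp add: T_op_def)

lemma T_deriv: "f holomorphic_on ball 0 1 \<Longrightarrow> g holomorphic_on ball 0 1 \<Longrightarrow> z \<in> ball 0 1 \<Longrightarrow>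
   deriv (T_op g f) z = f z * deriv g z"
  using T_has_deriv DERIV_imp_deriv by blast

lemma crude:
  assumes hh: "h holomorphic_on ball 0 1" and z: "z \<in> ball 0 1" and a: "a \<ge> 0"
    and K: "\<And>u. u \<in> ball 0 1 \<Longrightarrow> wt u powr a * cmod (deriv h u) \<le> K"
  shows "wt z powr a * cmod (h z - h 0) \<le> K * cmod z"
proof -
  have K0: "0 \<le> K" using K[of 0] by (smt (verit) centre_in_ball mult_nonneg_nonneg norm_ge_zero powr_ge_zero zero_less_one)
  have wz: "0 < wt z" using wt_pos[OF z] .
  have seg: "closed_segment 0 z \<subseteq> ball 0 1"
    using z convex_ball[of "0::complex" 1] by (simp add: convex_contains_segment)
  have "cmod (h z - h 0) \<le> (K / wt z powr a) * cmod (z - 0)"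
  proof (rule field_differentiable_bound[where S="closed_segment 0 z" and f'="deriv h"])
    show "convex (closed_segment 0 z)" by simp
    fix u assume u: "u \<in> closed_segment 0 z"
    then have ub: "u \<in> ball 0 1" using seg by blast
    show "(h has_field_derivative deriv h u) (at u within closed_segment 0 z)"
      using hh ub by (meson DERIV_deriv_iff_field_differentiable has_field_derivative_at_within holomorphic_on_imp_differentiable_at open_ball)
    have nu: "cmod u \<le> cmod z" using segment_bound(1)[OF u] by simp
    have wu: "0 < wt u" using wt_pos[OF ub] .
    have "wt z powr a \<le> wt u powr a" using wt_mono[OF nu] wz a by (intro powr_mono2) auto
    have pu: "0 < wt u powr a" using wu by simp
    have pz: "0 < wt z powr a" using wz by simp
    have "cmod (deriv h u) \<le> K / wt u powr a"
      using K[OF ub] pu by (simp add: field_simps mult.commute)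
    also have "\<dots> \<le> K / wt z powr a"
      using \<open>wt z powr a \<le> wt u powr a\<close> mult_pos_pos[OF pu pz] K0 by (intro divide_left_mono) auto
    finally show "cmod (deriv h u) \<le> K / wt z powr a" .
  qed (auto)
  then show ?thesis using wz by (simp add: field_simps mult.commute)
qed

lemma compare:
  assumes hh: "h holomorphic_on ball 0 1" and z: "z \<in> ball 0 1"
    and G: "\<And>s. 0 \<le> s \<Longrightarrow> s \<le> 1 \<Longrightarrow> (G has_real_derivative G' s) (at s)"
    and B: "\<And>s. 0 \<le> s \<Longrightarrow> s \<le> 1 \<Longrightarrow> cmod z * cmod (deriv h (of_real s * z)) \<le> G' s"
  shows "cmod (h z - h 0) \<le> G 1 - G 0"
proof -
  have sb: "of_real s * z \<in> ball 0 1" if "0 \<le> s" "s \<le> 1" for s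
  proof -
    have "cmod (of_real s * z) = s * cmod z" using that by (simp add: norm_mult)
    also have "\<dots> \<le> cmod z" using that by (simp add: mult_left_le_one_le)
    finally show ?thesis using z by simp
  qed
  define c where "c = cnj (h z - h 0)"
  have hd: "((\<lambda>s. Re (c * h (of_real s * z))) has_real_derivative Re (z * (c * deriv h (of_real s * z)))) (at s)"
    if "0 \<le> s" "s \<le> 1" for s :: real
  proof -
    have "(h has_field_derivative deriv h (of_real s * z)) (at (of_real s * z))"
      using hh sb[OF that] by (meson DERIV_deriv_iff_field_differentiable holomorphic_on_imp_differentiable_at open_ball)
    then have d1: "((\<lambda>w. c * h w) has_field_derivative c * deriv h (of_real s * z)) (at (of_real s * z))"
      by (rule DERIV_cmult)
    have d2: "((\<lambda>s. of_real s * z) has_vector_derivative z) (at s)"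
    proof -
      have "((\<lambda>x::real. x) has_field_derivative 1) (at s)" by simp
      from has_vector_derivative_mult_left[OF has_vector_derivative_of_real[OF this], of z]
      show ?thesis by simp
    qed
    have "(((\<lambda>w. c * h w) \<circ> (\<lambda>s. of_real s * z)) has_vector_derivative (z * (c * deriv h (of_real s * z)))) (at s)"
      by (rule field_vector_diff_chain_at[OF d2 d1])
    then show ?thesis by (auto dest: has_field_derivative_Re simp: o_def)
  qed
  have Gp: "0 \<le> G' s" if "0 \<le> s" "s \<le> 1" for s
    using B[OF that] by (smt (verit) mult_nonneg_nonneg norm_ge_zero)
  have G01: "G 0 \<le> G 1"
    by (rule DERIV_nonneg_imp_nondecreasing[of 0 1]) (use G Gp in auto)
  define \<phi> where "\<phi> s = Re (c * h (of_real s * z)) - cmod c * G s" for s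
  have "\<phi> 1 \<le> \<phi> 0"
  proof (rule DERIV_nonpos_imp_nonincreasing[of 0 1])
    fix s :: real assume s: "0 \<le> s" "s \<le> 1"
    have "(\<phi> has_real_derivative Re (z * (c * deriv h (of_real s * z))) - cmod c * G' s) (at s)"
      unfolding \<phi>_def[abs_def] by (intro DERIV_diff hd s DERIV_cmult G)
    moreover have "Re (z * (c * deriv h (of_real s * z))) \<le> cmod c * G' s"
    proof -
      have "Re (z * (c * deriv h (of_real s * z))) \<le> cmod (z * (c * deriv h (of_real s * z)))"
        by (rule complex_Re_le_cmod)
      also have "\<dots> = cmod c * (cmod z * cmod (deriv h (of_real s * z)))" by (simp add: norm_mult)
      also have "\<dots> \<le> cmod c * G' s" by (intro mult_left_mono B s) auto
      finally show ?thesis .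
    qed
    ultimately show "\<exists>y. (\<phi> has_real_derivative y) (at s) \<and> y \<le> 0" by force
  qed simp
  then have "Re (c * h z) - Re (c * h 0) \<le> cmod c * (G 1 - G 0)"
    by (simp add: \<phi>_def algebra_simps)
  moreover have "Re (c * h z) - Re (c * h 0) = (cmod (h z - h 0))^2"
  proof -
    have "Re (c * h z) - Re (c * h 0) = Re (c * (h z - h 0))" by (simp add: algebra_simps)
    also have "c * (h z - h 0) = of_real ((cmod (h z - h 0))^2)"
      using complex_norm_square[of "h z - h 0"] by (simp add: c_def mult.commute)
    finally show ?thesis by simp
  qed
  moreover have cc: "cmod c = cmod (h z - h 0)" unfolding c_def by (metis complex_mod_cnj)
  ultimately have "cmod (h z - h 0) * cmod (h z - h 0) \<le> cmod (h z - h 0) * (G 1 - G 0)"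
    by (simp add: power2_eq_square)
  then show ?thesis using G01
    by (cases "cmod (h z - h 0) = 0") (auto simp: mult_le_cancel_left)
qed



lemma K_nonneg: "(\<And>u. u \<in> ball 0 1 \<Longrightarrow> wt u powr a * cmod (F u) \<le> K) \<Longrightarrow> 0 \<le> K"
proof -
  assume "\<And>u. u \<in> ball 0 1 \<Longrightarrow> wt u powr a * cmod (F u) \<le> K"
  from this[of 0] show ?thesis by (smt (verit) centre_in_ball mult_nonneg_nonneg norm_ge_zero powr_ge_zero zero_less_one)
qed

lemma pt_bound:
  assumes u: "u \<in> ball 0 1" and K: "\<And>u. u \<in> ball 0 1 \<Longrightarrow> wt u powr a * cmod (F u) \<le> K"
    and a: "a \<ge> 0" and t: "0 < t" "t \<le> wt u"
  shows "cmod (F u) \<le> K / t powr a"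
proof -
  have K0: "0 \<le> K" by (rule K_nonneg[OF K])
  have pu: "0 < wt u powr a" using wt_pos[OF u] by simp
  have pt: "0 < t powr a" using t by simp
  have "cmod (F u) \<le> K / wt u powr a" using K[OF u] pu by (simp add: field_simps mult.commute)
  also have "\<dots> \<le> K / t powr a"
    using powr_mono2[OF a less_imp_le[OF t(1)] t(2)] mult_pos_pos[OF pu pt] K0
    by (intro divide_left_mono) auto
  finally show ?thesis .
qed

lemma int_bound_pow:
  assumes hh: "h holomorphic_on ball 0 1" and z: "z \<in> ball 0 1" and a: "a \<ge> 0" "a \<noteq> 1"
    and K: "\<And>u. u \<in> ball 0 1 \<Longrightarrow> wt u powr a * cmod (deriv h u) \<le> K"
  shows "cmod (h z - h 0) \<le> K * ((1 - cmod z) powr (1 - a) - 1) / (a - 1)"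
proof -
  define r where "r = cmod z"
  have r: "0 \<le> r" "r < 1" using z by (auto simp: r_def)
  define G where "G s = K * (1 - s * r) powr (1 - a) / (a - 1)" for s
  have pos: "0 < 1 - s * r" if "0 \<le> s" "s \<le> 1" for s
    using r that by (smt (verit) mult_left_le_one_le)
  have "cmod (h z - h 0) \<le> G 1 - G 0"
  proof (rule compare[OF hh z])
    fix s :: real assume s: "0 \<le> s" "s \<le> 1"
    have "((\<lambda>s. 1 - s * r) has_real_derivative (- r)) (at s)"
      by (auto intro!: derivative_eq_intros)
    from DERIV_fun_powr[OF this pos[OF s], of "1 - a"]
    have "((\<lambda>s. (1 - s * r) powr (1 - a)) has_real_derivative
       (1 - a) * (1 - s * r) powr (1 - a - 1) * - r) (at s)" by simp
    then have "(G has_real_derivative K * ((1 - a) * (1 - s * r) powr (1 - a - 1) * - r) / (a - 1)) (at s)"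
      unfolding G_def[abs_def] by (intro DERIV_cdivide DERIV_cmult)
    moreover have "K * ((1 - a) * (1 - s * r) powr (1 - a - 1) * - r) / (a - 1) = K * r * (1 - s * r) powr (- a)"
      using a by (simp add: field_simps)
    ultimately show "(G has_real_derivative K * r * (1 - s * r) powr (- a)) (at s)" by simp
    have sz: "of_real s * z \<in> ball 0 1" using s z by (simp add: norm_mult mult_left_le_one_le le_less_trans[of _ "cmod z"])
    have "1 - s * r \<le> wt (of_real s * z)"
      using wt_ge[OF sz] s by (simp add: norm_mult r_def)
    from pt_bound[OF sz K a(1) pos[OF s] this]
    have "cmod (deriv h (of_real s * z)) \<le> K / (1 - s * r) powr a" .
    then have "r * cmod (deriv h (of_real s * z)) \<le> r * (K / (1 - s * r) powr a)"
      using r by (intro mult_left_mono) auto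
    also have "\<dots> = K * r * (1 - s * r) powr (- a)" by (simp add: powr_minus divide_inverse)
    finally show "cmod z * cmod (deriv h (of_real s * z)) \<le> K * r * (1 - s * r) powr (- a)"
      by (simp add: r_def)
  qed
  also have "G 1 - G 0 = K * ((1 - cmod z) powr (1 - a) - 1) / (a - 1)"
  proof -
    have "a - 1 \<noteq> 0" using a by simp
    then show ?thesis by (simp add: G_def r_def diff_divide_distrib right_diff_distrib)
  qed
  finally show ?thesis .
qed

lemma int_bound_log:
  assumes hh: "h holomorphic_on ball 0 1" and z: "z \<in> ball 0 1"
    and K: "\<And>u. u \<in> ball 0 1 \<Longrightarrow> wt u powr 1 * cmod (deriv h u) \<le> K"
  shows "cmod (h z - h 0) \<le> K * ln (1 / (1 - cmod z))"
proof -
  define r where "r = cmod z"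
  have r: "0 \<le> r" "r < 1" using z by (auto simp: r_def)
  define G where "G s = - K * ln (1 - s * r)" for s
  have pos: "0 < 1 - s * r" if "0 \<le> s" "s \<le> 1" for s
    using r that by (smt (verit) mult_left_le_one_le)
  have "cmod (h z - h 0) \<le> G 1 - G 0"
  proof (rule compare[OF hh z])
    fix s :: real assume s: "0 \<le> s" "s \<le> 1"
    show "(G has_real_derivative K * r / (1 - s * r)) (at s)"
      unfolding G_def[abs_def] using pos[OF s]
      by (auto intro!: derivative_eq_intros simp: field_simps)
    have sz: "of_real s * z \<in> ball 0 1" using s z by (simp add: norm_mult mult_left_le_one_le le_less_trans[of _ "cmod z"])
    have "1 - s * r \<le> wt (of_real s * z)"
      using wt_ge[OF sz] s by (simp add: norm_mult r_def)
    from pt_bound[OF sz K _ pos[OF s] this]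
    have "cmod (deriv h (of_real s * z)) \<le> K / (1 - s * r)" using pos[OF s] by simp
    then have "r * cmod (deriv h (of_real s * z)) \<le> r * (K / (1 - s * r))"
      using r by (intro mult_left_mono) auto
    then show "cmod z * cmod (deriv h (of_real s * z)) \<le> K * r / (1 - s * r)"
      by (simp add: r_def mult.commute)
  qed
  also have "G 1 - G 0 = K * ln (1 / (1 - cmod z))"
    using r by (simp add: G_def r_def ln_div)
  finally show ?thesis .
qed

lemma cauchy_est:
  assumes hh: "h holomorphic_on ball 0 1" and z: "z \<in> ball 0 1" and b: "b \<ge> 0"
    and K: "\<And>u. u \<in> ball 0 1 \<Longrightarrow> wt u powr b * cmod (h u) \<le> K"
  shows "wt z powr (b + 1) * cmod (deriv h z) \<le> 4 powr (b + 1) * K"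
proof -
  have K0: "0 \<le> K" by (rule K_nonneg[OF K])
  define r where "r = (1 - cmod z) / 2"
  have r: "0 < r" using z by (simp add: r_def)
  have sub: "cball z r \<subseteq> ball 0 1"
  proof
    fix x assume "x \<in> cball z r"
    then have "cmod x \<le> cmod z + r" using norm_triangle_ineq2[of x z] by (simp add: dist_norm norm_minus_commute)
    then show "x \<in> ball 0 1" using z by (simp add: r_def field_simps)
  qed
  have "cmod ((deriv ^^ 1) h z) \<le> fact 1 * (K / r powr b) / r ^ 1"
  proof (rule Cauchy_inequality)
    show "h holomorphic_on ball z r" using hh sub ball_subset_cball by (meson holomorphic_on_subset subset_trans)
    show "continuous_on (cball z r) h" using hh sub holomorphic_on_imp_continuous_on continuous_on_subset by blast
    fix x assume x: "cmod (z - x) = r"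
    then have xb: "x \<in> ball 0 1" using sub by (auto simp: dist_norm)
    have "cmod x \<le> cmod z + r" using x norm_triangle_ineq2[of x z] by (simp add: norm_minus_commute)
    then have "r \<le> 1 - cmod x" unfolding r_def by argo
    then have "r \<le> wt x" using wt_ge[OF xb] by linarith
    from pt_bound[OF xb K b r this] show "cmod (h x) \<le> K / r powr b" .
  qed (use r in auto)
  then have d: "cmod (deriv h z) \<le> K / r powr (b + 1)"
    using r by (simp add: powr_add)
  have "wt z \<le> 4 * r" using wt_le2[OF z] by (simp add: r_def)
  then have w: "wt z powr (b + 1) \<le> (4 * r) powr (b + 1)"
    using wt_pos[OF z] b by (intro powr_mono2) auto
  have "wt z powr (b + 1) * cmod (deriv h z) \<le> (4 * r) powr (b + 1) * (K / r powr (b + 1))"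
    using w d wt_pos[OF z] by (intro mult_mono) auto
  also have "\<dots> = 4 powr (b + 1) * K" using r by (simp add: powr_mult)
  finally show ?thesis .
qed



lemma C_eq: "f holomorphic_on ball 0 1 \<Longrightarrow> g holomorphic_on ball 0 1 \<Longrightarrow>
  C_op g f = (\<lambda>z. if z = 0 then deriv (T_op g f) 0 else (T_op g f z - T_op g f 0) / (z - 0))"
  by (rule ext) (simp add: C_op_def T_zero T_deriv)

lemma C_hol: "f holomorphic_on ball 0 1 \<Longrightarrow> g holomorphic_on ball 0 1 \<Longrightarrow> C_op g f holomorphic_on ball 0 1"
  using C_eq pole_lemma_open[OF T_hol open_ball] by metis

lemma C_T: "T_op g f z = z * C_op g f z"
  by (simp add: C_op_def T_zero)

lemma C_deriv:
  assumes hf: "f holomorphic_on ball 0 1" and hg: "g holomorphic_on ball 0 1" and z: "z \<in> ball 0 1"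
  shows "deriv (T_op g f) z = C_op g f z + z * deriv (C_op g f) z"
proof -
  have "(C_op g f has_field_derivative deriv (C_op g f) z) (at z)"
    using C_hol[OF hf hg] z by (meson DERIV_deriv_iff_field_differentiable holomorphic_on_imp_differentiable_at open_ball)
  then have "((\<lambda>z. z * C_op g f z) has_field_derivative C_op g f z + z * deriv (C_op g f) z) (at z)"
    by (auto intro!: derivative_eq_intros)
  then have "(T_op g f has_field_derivative C_op g f z + z * deriv (C_op g f) z) (at z)"
    by (simp add: C_T[symmetric])
  then show ?thesis by (rule DERIV_imp_deriv)
qed

lemma C_bound:
  assumes hf: "f holomorphic_on ball 0 1" and hg: "g holomorphic_on ball 0 1" and z: "z \<in> ball 0 1"
    and a: "a \<ge> 0" and K: "\<And>u. u \<in> ball 0 1 \<Longrightarrow> wt u powr a * cmod (deriv (T_op g f) u) \<le> K"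
  shows "wt z powr a * cmod (C_op g f z) \<le> K"
proof (cases "z = 0")
  case True
  then show ?thesis using K[of 0] by (simp add: C_op_def T_deriv[OF hf hg])
next
  case False
  have "wt z powr a * cmod (T_op g f z - T_op g f 0) \<le> K * cmod z"
    by (rule crude[OF T_hol[OF hf hg] z a K])
  then have "wt z powr a * cmod (C_op g f z) * cmod z \<le> K * cmod z"
    by (simp add: T_zero C_T norm_mult mult_ac)
  then show ?thesis using False by simp
qed



lemma bo_mono:
  assumes "bounded_op X nX Y nY S" "A \<ge> 0"
    and "\<And>f. f \<in> X \<Longrightarrow> S f \<in> Y \<Longrightarrow> R f \<in> Z \<and> nZ (R f) \<le> A * nY (S f)"
  shows "bounded_op X nX Z nZ R"
proof -
  from assms(1) obtain C where S: "\<forall>f\<in>X. S f \<in> Y" and C: "\<forall>f\<in>X. nY (S f) \<le> C * nX f"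
    unfolding bounded_op_def by blast
  have "\<forall>f\<in>X. nZ (R f) \<le> (A * C) * nX f"
  proof
    fix f assume f: "f \<in> X"
    have "nZ (R f) \<le> A * nY (S f)" using assms(3)[OF f] S f by blast
    also have "\<dots> \<le> A * (C * nX f)" using C f assms(2) by (intro mult_left_mono) auto
    finally show "nZ (R f) \<le> (A * C) * nX f" by (simp add: mult_ac)
  qed
  then show ?thesis unfolding bounded_op_def using assms(3) S by blast
qed

lemma growthT_to_C:
  assumes hf: "f holomorphic_on ball 0 1" and hg: "g holomorphic_on ball 0 1" and b: "\<beta> > 0"
    and T: "T_op g f \<in> growth_space \<beta>"
  shows "C_op g f \<in> growth_space \<beta> \<and> growth_norm \<beta> (C_op g f) \<le> (2 + 2 * 4 powr (\<beta> + 1)) * growth_norm \<beta> (T_op g f)"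
proof -
  define N where "N = growth_norm \<beta> (T_op g f)"
  have N0: "0 \<le> N" using gn_nonneg[OF T] by (simp add: N_def)
  have hN: "wt u powr \<beta> * cmod (T_op g f u) \<le> N" if "u \<in> ball 0 1" for u
    using gn_upper[OF T that] by (simp add: N_def)
  have dh: "wt u powr (\<beta> + 1) * cmod (deriv (T_op g f) u) \<le> 4 powr (\<beta> + 1) * N" if "u \<in> ball 0 1" for u
    by (rule cauchy_est[OF T_hol[OF hf hg] that _ hN]) (use b in auto)
  have kb: "wt u powr (\<beta> + 1) * cmod (C_op g f u) \<le> 4 powr (\<beta> + 1) * N" if "u \<in> ball 0 1" for u
    by (rule C_bound[OF hf hg that _ dh]) (use b in auto)
  have main: "wt z powr \<beta> * cmod (C_op g f z) \<le> (2 + 2 * 4 powr (\<beta> + 1)) * N" if z: "z \<in> ball 0 1" for z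
  proof (cases "cmod z \<ge> 1/2")
    case True
    have "cmod (T_op g f z) = cmod z * cmod (C_op g f z)" by (simp add: C_T norm_mult)
    moreover have "(1/2) * cmod (C_op g f z) \<le> cmod z * cmod (C_op g f z)"
      by (rule mult_right_mono[OF True norm_ge_zero])
    ultimately have "cmod (C_op g f z) \<le> 2 * cmod (T_op g f z)" by linarith
    then have "wt z powr \<beta> * cmod (C_op g f z) \<le> wt z powr \<beta> * (2 * cmod (T_op g f z))"
      by (rule mult_left_mono) simp
    also have "\<dots> = 2 * (wt z powr \<beta> * cmod (T_op g f z))" by (simp add: mult_ac)
    also have "\<dots> \<le> 2 * N" using hN[OF z] by simp
    also have "\<dots> \<le> (2 + 2 * 4 powr (\<beta> + 1)) * N" using N0 by (simp add: distrib_right)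
    finally show ?thesis .
  next
    case False
    then have "cmod z ^ 2 \<le> (1/2) ^ 2" by (intro power_mono) auto
    then have w: "1/2 \<le> wt z" by (simp add: power2_eq_square)
    have "(1/2) * (wt z powr \<beta> * cmod (C_op g f z)) \<le> wt z * (wt z powr \<beta> * cmod (C_op g f z))"
      by (rule mult_right_mono[OF w]) simp
    also have "\<dots> = wt z powr (\<beta> + 1) * cmod (C_op g f z)" using wt_pos[OF z] by (simp add: powr_add mult_ac)
    also have "\<dots> \<le> 4 powr (\<beta> + 1) * N" by (rule kb[OF z])
    finally have "(1/2) * (wt z powr \<beta> * cmod (C_op g f z)) \<le> 4 powr (\<beta> + 1) * N" .
    then have "wt z powr \<beta> * cmod (C_op g f z) \<le> 2 * 4 powr (\<beta> + 1) * N" by simp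
    also have "\<dots> \<le> (2 + 2 * 4 powr (\<beta> + 1)) * N" using N0 by (simp add: distrib_right)
    finally show ?thesis .
  qed
  show ?thesis using gs_intro[OF C_hol[OF hf hg] main] gn_least[OF main] by (simp add: N_def)
qed

lemma growthC_to_T:
  assumes hf: "f holomorphic_on ball 0 1" and hg: "g holomorphic_on ball 0 1"
    and C: "C_op g f \<in> growth_space \<beta>"
  shows "T_op g f \<in> growth_space \<beta> \<and> growth_norm \<beta> (T_op g f) \<le> 1 * growth_norm \<beta> (C_op g f)"
proof -
  have main: "wt z powr \<beta> * cmod (T_op g f z) \<le> growth_norm \<beta> (C_op g f)" if z: "z \<in> ball 0 1" for z
  proof -
    have "cmod (T_op g f z) \<le> cmod (C_op g f z)" using z
      by (simp add: C_T norm_mult mult_left_le_one_le less_imp_le)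
    then have "wt z powr \<beta> * cmod (T_op g f z) \<le> wt z powr \<beta> * cmod (C_op g f z)"
      by (intro mult_left_mono) auto
    also have "\<dots> \<le> growth_norm \<beta> (C_op g f)" by (rule gn_upper[OF C z])
    finally show ?thesis .
  qed
  show ?thesis using gs_intro[OF T_hol[OF hf hg] main] gn_least[OF main] by simp
qed

lemma blochT_to_C:
  assumes hf: "f holomorphic_on ball 0 1" and hg: "g holomorphic_on ball 0 1" and b: "\<beta> > 0"
    and T: "T_op g f \<in> bloch_type \<beta>"
  shows "C_op g f \<in> bloch_type \<beta> \<and> bloch_norm \<beta> (C_op g f) \<le> (5 + 2 * 4 powr (\<beta> + 1)) * bloch_norm \<beta> (T_op g f)"
proof -
  define K where "K = bloch_norm \<beta> (T_op g f)"
  have K0: "0 \<le> K" using bn_nonneg[OF T] by (simp add: K_def)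
  have dh: "wt u powr \<beta> * cmod (deriv (T_op g f) u) \<le> K" if "u \<in> ball 0 1" for u
    using bn_upper[OF T that] by (simp add: K_def T_zero)
  have kb: "wt u powr \<beta> * cmod (C_op g f u) \<le> K" if "u \<in> ball 0 1" for u
    by (rule C_bound[OF hf hg that _ dh]) (use b in auto)
  have dk: "wt u powr (\<beta> + 1) * cmod (deriv (C_op g f) u) \<le> 4 powr (\<beta> + 1) * K" if "u \<in> ball 0 1" for u
    by (rule cauchy_est[OF C_hol[OF hf hg] that _ kb]) (use b in auto)
  have main: "wt z powr \<beta> * cmod (deriv (C_op g f) z) \<le> 4 * K + 2 * 4 powr (\<beta> + 1) * K" if z: "z \<in> ball 0 1" for z
  proof (cases "cmod z \<ge> 1/2")
    case True
    have eq: "z * deriv (C_op g f) z = deriv (T_op g f) z - C_op g f z"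
      using C_deriv[OF hf hg z] by simp
    have "cmod z * cmod (deriv (C_op g f) z) \<le> cmod (deriv (T_op g f) z) + cmod (C_op g f z)"
    proof -
      have "cmod z * cmod (deriv (C_op g f) z) = cmod (deriv (T_op g f) z - C_op g f z)"
        by (simp add: eq[symmetric] norm_mult)
      also have "\<dots> \<le> cmod (deriv (T_op g f) z) + cmod (C_op g f z)" by (rule norm_triangle_ineq4)
      finally show ?thesis .
    qed
    moreover have "(1/2) * cmod (deriv (C_op g f) z) \<le> cmod z * cmod (deriv (C_op g f) z)"
      by (rule mult_right_mono[OF True norm_ge_zero])
    ultimately have "cmod (deriv (C_op g f) z) \<le> 2 * cmod (deriv (T_op g f) z) + 2 * cmod (C_op g f z)"
      by linarith
    then have "cmod (deriv (C_op g f) z) \<le> 2 * (cmod (deriv (T_op g f) z) + cmod (C_op g f z))"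
      by (simp add: distrib_left)
    then have "wt z powr \<beta> * cmod (deriv (C_op g f) z) \<le> wt z powr \<beta> * (2 * (cmod (deriv (T_op g f) z) + cmod (C_op g f z)))"
      by (rule mult_left_mono) simp
    also have "\<dots> = 2 * (wt z powr \<beta> * cmod (deriv (T_op g f) z) + wt z powr \<beta> * cmod (C_op g f z))"
      by (simp add: algebra_simps)
    also have "\<dots> \<le> 2 * (K + K)" using dh[OF z] kb[OF z] by simp
    also have "\<dots> \<le> 4 * K + 2 * 4 powr (\<beta> + 1) * K" using K0 by simp
    finally show ?thesis .
  next
    case False
    then have "cmod z ^ 2 \<le> (1/2) ^ 2" by (intro power_mono) auto
    then have w: "1/2 \<le> wt z" by (simp add: power2_eq_square)
    have "(1/2) * (wt z powr \<beta> * cmod (deriv (C_op g f) z)) \<le> wt z * (wt z powr \<beta> * cmod (deriv (C_op g f) z))"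
      by (rule mult_right_mono[OF w]) simp
    also have "\<dots> = wt z powr (\<beta> + 1) * cmod (deriv (C_op g f) z)" using wt_pos[OF z] by (simp add: powr_add mult_ac)
    also have "\<dots> \<le> 4 powr (\<beta> + 1) * K" by (rule dk[OF z])
    finally have "(1/2) * (wt z powr \<beta> * cmod (deriv (C_op g f) z)) \<le> 4 powr (\<beta> + 1) * K" .
    then have "wt z powr \<beta> * cmod (deriv (C_op g f) z) \<le> 2 * 4 powr (\<beta> + 1) * K" by simp
    also have "\<dots> \<le> 4 * K + 2 * 4 powr (\<beta> + 1) * K" using K0 by simp
    finally show ?thesis .
  qed
  have k0: "cmod (C_op g f 0) \<le> K" using kb[of 0] by simp
  have "bloch_norm \<beta> (C_op g f) \<le> cmod (C_op g f 0) + (4 * K + 2 * 4 powr (\<beta> + 1) * K)"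
    by (rule bn_least[OF main])
  also have "\<dots> \<le> (5 + 2 * 4 powr (\<beta> + 1)) * K" using k0 by (simp add: algebra_simps)
  finally show ?thesis using bt_intro[OF C_hol[OF hf hg] main] by (simp add: K_def)
qed

lemma blochC_to_T:
  assumes hf: "f holomorphic_on ball 0 1" and hg: "g holomorphic_on ball 0 1" and b: "\<beta> > 0"
    and C: "C_op g f \<in> bloch_type \<beta>"
  shows "T_op g f \<in> bloch_type \<beta> \<and> bloch_norm \<beta> (T_op g f) \<le> 2 * bloch_norm \<beta> (C_op g f)"
proof -
  define N where "N = bloch_norm \<beta> (C_op g f)"
  have dk: "wt u powr \<beta> * cmod (deriv (C_op g f) u) \<le> N - cmod (C_op g f 0)" if "u \<in> ball 0 1" for u
    using bn_upper[OF C that] by (simp add: N_def)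
  have kb: "wt z powr \<beta> * cmod (C_op g f z) \<le> N" if z: "z \<in> ball 0 1" for z
  proof -
    have "wt z powr \<beta> * cmod (C_op g f z - C_op g f 0) \<le> (N - cmod (C_op g f 0)) * cmod z"
      by (rule crude[OF C_hol[OF hf hg] z _ dk]) (use b in auto)
    also have "\<dots> \<le> N - cmod (C_op g f 0)"
      using z K_nonneg[OF dk] by (intro mult_right_le_one_le) auto
    finally have 1: "wt z powr \<beta> * cmod (C_op g f z - C_op g f 0) \<le> N - cmod (C_op g f 0)" .
    have w1: "wt z powr \<beta> \<le> 1" using powr_mono2[of \<beta> "wt z" 1] wt_pos[OF z] b by simp
    have "wt z powr \<beta> * cmod (C_op g f z) \<le> wt z powr \<beta> * (cmod (C_op g f 0) + cmod (C_op g f z - C_op g f 0))"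
      by (intro mult_left_mono) (auto simp: norm_triangle_sub)
    also have "\<dots> = wt z powr \<beta> * cmod (C_op g f 0) + wt z powr \<beta> * cmod (C_op g f z - C_op g f 0)"
      by (simp add: distrib_left)
    also have "\<dots> \<le> cmod (C_op g f 0) + (N - cmod (C_op g f 0))"
    proof -
      have "wt z powr \<beta> * cmod (C_op g f 0) \<le> 1 * cmod (C_op g f 0)"
        by (rule mult_right_mono[OF w1 norm_ge_zero])
      then show ?thesis using 1 by linarith
    qed
    finally show ?thesis by simp
  qed
  have main: "wt z powr \<beta> * cmod (deriv (T_op g f) z) \<le> 2 * N" if z: "z \<in> ball 0 1" for z
  proof -
    have "cmod (deriv (T_op g f) z) \<le> cmod (C_op g f z) + cmod (deriv (C_op g f) z)"
    proof -
      have "cmod (deriv (T_op g f) z) \<le> cmod (C_op g f z) + cmod (z * deriv (C_op g f) z)"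
        unfolding C_deriv[OF hf hg z] by (rule norm_triangle_ineq)
      moreover have "cmod (z * deriv (C_op g f) z) \<le> 1 * cmod (deriv (C_op g f) z)"
        unfolding norm_mult using z by (intro mult_right_mono) auto
      ultimately show ?thesis by simp
    qed
    then have "wt z powr \<beta> * cmod (deriv (T_op g f) z) \<le> wt z powr \<beta> * (cmod (C_op g f z) + cmod (deriv (C_op g f) z))"
      by (rule mult_left_mono) simp
    also have "\<dots> = wt z powr \<beta> * cmod (C_op g f z) + wt z powr \<beta> * cmod (deriv (C_op g f) z)"
      by (simp add: distrib_left)
    also have "\<dots> \<le> N + N" using kb[OF z] dk[OF z] norm_ge_zero[of "C_op g f 0"] by linarith
    finally show ?thesis by simp
  qed
  show ?thesis using bt_intro[OF T_hol[OF hf hg] main] bn_least[OF main] by (simp add: N_def T_zero)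
qed



lemma M_hol: "f holomorphic_on ball 0 1 \<Longrightarrow> g holomorphic_on ball 0 1 \<Longrightarrow> M_op g f holomorphic_on ball 0 1"
  unfolding M_op_def[abs_def] by (intro holomorphic_intros holomorphic_deriv) auto

lemma T_deriv_M: "f holomorphic_on ball 0 1 \<Longrightarrow> g holomorphic_on ball 0 1 \<Longrightarrow> z \<in> ball 0 1 \<Longrightarrow>
   deriv (T_op g f) z = M_op g f z"
  by (simp add: T_deriv M_op_def mult.commute)

lemma growthT_to_M:
  assumes hf: "f holomorphic_on ball 0 1" and hg: "g holomorphic_on ball 0 1" and b: "\<beta> > 0"
    and T: "T_op g f \<in> growth_space \<beta>"
  shows "M_op g f \<in> growth_space (\<beta> + 1) \<and> growth_norm (\<beta> + 1) (M_op g f) \<le> 4 powr (\<beta> + 1) * growth_norm \<beta> (T_op g f)"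
proof -
  have main: "wt z powr (\<beta> + 1) * cmod (M_op g f z) \<le> 4 powr (\<beta> + 1) * growth_norm \<beta> (T_op g f)"
    if z: "z \<in> ball 0 1" for z
    using cauchy_est[OF T_hol[OF hf hg] z _ gn_upper[OF T]] b T_deriv_M[OF hf hg z] by simp
  show ?thesis using gs_intro[OF M_hol[OF hf hg] main] gn_least[OF main] by simp
qed

lemma growthM_to_T:
  assumes hf: "f holomorphic_on ball 0 1" and hg: "g holomorphic_on ball 0 1" and b: "\<beta> > 0"
    and M: "M_op g f \<in> growth_space (\<beta> + 1)"
  shows "T_op g f \<in> growth_space \<beta> \<and> growth_norm \<beta> (T_op g f) \<le> (2 powr \<beta> / \<beta>) * growth_norm (\<beta> + 1) (M_op g f)"
proof -
  define N where "N = growth_norm (\<beta> + 1) (M_op g f)"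
  have K: "wt u powr (\<beta> + 1) * cmod (deriv (T_op g f) u) \<le> N" if "u \<in> ball 0 1" for u
    using gn_upper[OF M that] T_deriv_M[OF hf hg that] by (simp add: N_def)
  have N0: "0 \<le> N" by (rule K_nonneg[OF K])
  have main: "wt z powr \<beta> * cmod (T_op g f z) \<le> (2 powr \<beta> / \<beta>) * N" if z: "z \<in> ball 0 1" for z
  proof -
    define r where "r = cmod z"
    have r: "0 \<le> r" "r < 1" using z by (auto simp: r_def)
    have "cmod (T_op g f z - T_op g f 0) \<le> N * ((1 - cmod z) powr (1 - (\<beta> + 1)) - 1) / (\<beta> + 1 - 1)"
      by (rule int_bound_pow[OF T_hol[OF hf hg] z _ _ K]) (use b in auto)
    then have "cmod (T_op g f z) \<le> N * ((1 - r) powr (- \<beta>) - 1) / \<beta>" by (simp add: T_zero r_def)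
    also have "\<dots> \<le> N * (1 - r) powr (- \<beta>) / \<beta>"
      using N0 b by (intro divide_right_mono mult_left_mono) auto
    finally have hT: "cmod (T_op g f z) \<le> N * (1 - r) powr (- \<beta>) / \<beta>" .
    have "wt z powr \<beta> \<le> (2 * (1 - r)) powr \<beta>"
      using wt_le2[OF z] wt_pos[OF z] b by (intro powr_mono2) (auto simp: r_def)
    also have "\<dots> = 2 powr \<beta> * (1 - r) powr \<beta>" by (rule powr_mult)
    finally have hw: "wt z powr \<beta> \<le> 2 powr \<beta> * (1 - r) powr \<beta>" .
    have "wt z powr \<beta> * cmod (T_op g f z) \<le> (2 powr \<beta> * (1 - r) powr \<beta>) * (N * (1 - r) powr (- \<beta>) / \<beta>)"
      using hw hT by (intro mult_mono) auto
    also have "\<dots> = (2 powr \<beta> / \<beta>) * N * ((1 - r) powr \<beta> * (1 - r) powr (- \<beta>))" by (simp add: field_simps)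
    also have "(1 - r) powr \<beta> * (1 - r) powr (- \<beta>) = 1" using r by (simp add: powr_add[symmetric])
    finally show ?thesis by simp
  qed
  show ?thesis using gs_intro[OF T_hol[OF hf hg] main] gn_least[OF main] by (simp add: N_def)
qed

lemma blochT_M:
  assumes hf: "f holomorphic_on ball 0 1" and hg: "g holomorphic_on ball 0 1"
  shows "(T_op g f \<in> bloch_type \<beta> \<longleftrightarrow> M_op g f \<in> growth_space \<beta>) \<and> bloch_norm \<beta> (T_op g f) = growth_norm \<beta> (M_op g f)"
proof -
  have e: "\<And>z. z \<in> ball 0 1 \<Longrightarrow> wt z powr \<beta> * cmod (deriv (T_op g f) z) = wt z powr \<beta> * cmod (M_op g f z)"
    using T_deriv_M[OF hf hg] by simp
  have eqC: "(\<forall>z\<in>ball 0 1. wt z powr \<beta> * cmod (deriv (T_op g f) z) \<le> C) \<longleftrightarrow>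
      (\<forall>z\<in>ball 0 1. wt z powr \<beta> * cmod (M_op g f z) \<le> C)" for C
    using T_deriv_M[OF hf hg] by auto
  have "T_op g f \<in> bloch_type \<beta> \<longleftrightarrow> M_op g f \<in> growth_space \<beta>"
    unfolding bloch_type_def growth_space_def mem_Collect_eq eqC using T_hol[OF hf hg] M_hol[OF hf hg] by blast
  moreover have "(SUP z\<in>ball 0 1. wt z powr \<beta> * cmod (deriv (T_op g f) z)) = (SUP z\<in>ball 0 1. wt z powr \<beta> * cmod (M_op g f z))"
    by (rule SUP_cong) (simp_all add: T_deriv_M[OF hf hg])
  then have "bloch_norm \<beta> (T_op g f) = growth_norm \<beta> (M_op g f)"
    unfolding bloch_norm_def growth_norm_def by (simp add: T_zero)
  ultimately show ?thesis by blast
qed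

lemma key_ineq:
  assumes a: "a \<in> ball 0 1" and w: "w \<in> ball 0 1"
  shows "wt w \<le> 2 * cmod (1 - cnj a * w)" "wt a \<le> 2 * cmod (1 - cnj a * w)"
proof -
  have n: "1 - cmod a * cmod w \<le> cmod (1 - cnj a * w)"
    using norm_triangle_ineq2[of 1 "cnj a * w"] by (simp add: norm_mult)
  have la: "cmod a \<le> 1" "cmod w \<le> 1" using a w by auto
  have "1 - cmod w \<le> 1 - cmod a * cmod w" using la mult_left_le_one_le[of "cmod w" "cmod a"] by simp
  then have "1 - cmod w \<le> cmod (1 - cnj a * w)" using n by (rule order_trans)
  then have "2 * (1 - cmod w) \<le> 2 * cmod (1 - cnj a * w)" by (rule mult_left_mono) simp
  with wt_le2[OF w] show "wt w \<le> 2 * cmod (1 - cnj a * w)" by (rule order_trans)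
  have "1 - cmod a \<le> 1 - cmod a * cmod w" using la mult_right_le_one_le[of "cmod a" "cmod w"] by simp
  then have "1 - cmod a \<le> cmod (1 - cnj a * w)" using n by (rule order_trans)
  then have "2 * (1 - cmod a) \<le> 2 * cmod (1 - cnj a * w)" by (rule mult_left_mono) simp
  with wt_le2[OF a] show "wt a \<le> 2 * cmod (1 - cnj a * w)" by (rule order_trans)
qed

lemma den_nz: "a \<in> ball 0 1 \<Longrightarrow> w \<in> ball 0 1 \<Longrightarrow> 0 < cmod (1 - cnj a * w)"
  using key_ineq(1)[of a w] wt_pos[of w] by linarith

definition tf :: "real \<Rightarrow> complex \<Rightarrow> nat \<Rightarrow> complex \<Rightarrow> complex" where
  "tf c a m = (\<lambda>w. of_real (wt a powr (real m - c)) / (1 - cnj a * w) ^ m)"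

lemma tf_hol: "a \<in> ball 0 1 \<Longrightarrow> tf c a m holomorphic_on ball 0 1"
  unfolding tf_def using den_nz by (intro holomorphic_intros) force

lemma tf_at: "a \<in> ball 0 1 \<Longrightarrow> tf c a m a = of_real (wt a powr (- c))"
proof -
  assume a: "a \<in> ball 0 1"
  have "1 - cnj a * a = of_real (wt a)" using complex_norm_square[of a] by (simp add: mult.commute)
  then have "tf c a m a = of_real (wt a powr (real m - c) / wt a ^ m)" by (simp add: tf_def)
  also have "wt a powr (real m - c) / wt a ^ m = wt a powr (- c)"
    using wt_pos[OF a] by (simp add: powr_diff powr_realpow[symmetric] powr_minus divide_inverse)
  finally show ?thesis .
qed

lemma tf_bound:
  assumes a: "a \<in> ball 0 1" and w: "w \<in> ball 0 1" and c: "0 \<le> c" "c \<le> real m"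
  shows "wt w powr c * cmod (tf c a m w) \<le> 2 ^ m"
proof -
  define D where "D = cmod (1 - cnj a * w)"
  have D: "0 < D" using den_nz[OF a w] by (simp add: D_def)
  have "wt w powr c \<le> (2 * D) powr c"
    using key_ineq(1)[OF a w] wt_pos[OF w] c by (intro powr_mono2) (auto simp: D_def)
  moreover have "wt a powr (real m - c) \<le> (2 * D) powr (real m - c)"
    using key_ineq(2)[OF a w] wt_pos[OF a] c by (intro powr_mono2) (auto simp: D_def)
  ultimately have "wt w powr c * wt a powr (real m - c) \<le> (2 * D) powr c * (2 * D) powr (real m - c)"
    by (intro mult_mono) auto
  also have "\<dots> = (2 * D) ^ m" using D by (simp add: powr_add[symmetric] powr_realpow)
  finally have 1: "wt w powr c * wt a powr (real m - c) \<le> 2 ^ m * D ^ m" by (simp add: power_mult_distrib)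
  have "cmod (tf c a m w) = wt a powr (real m - c) / D ^ m"
    by (simp add: tf_def D_def norm_divide norm_power)
  then have "wt w powr c * cmod (tf c a m w) = (wt w powr c * wt a powr (real m - c)) / D ^ m" by simp
  also have "\<dots> \<le> (2 ^ m * D ^ m) / D ^ m" using 1 D by (intro divide_right_mono) auto
  also have "\<dots> = 2 ^ m" using D by simp
  finally show ?thesis .
qed

lemma tf_space:
  assumes a: "a \<in> ball 0 1" and c: "0 \<le> c" "c \<le> real m"
  shows "tf c a m \<in> growth_space c \<and> growth_norm c (tf c a m) \<le> 2 ^ m"
  using gs_intro[OF tf_hol[OF a] tf_bound[OF a _ c]] gn_least[OF tf_bound[OF a _ c]] by blast

lemma part3:
  assumes hg: "g holomorphic_on ball 0 1" and b: "\<beta> > 0" and c: "\<gamma> > 0"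
  shows "bounded_op (growth_space \<gamma>) (growth_norm \<gamma>) (growth_space (\<beta>+1)) (growth_norm (\<beta>+1)) (M_op g)
       \<longleftrightarrow> (\<exists>C. \<forall>z\<in>ball 0 1. (1 - (cmod z)^2) powr (\<beta> + 1 - \<gamma>) * cmod (deriv g z) \<le> C)"
proof
  assume "bounded_op (growth_space \<gamma>) (growth_norm \<gamma>) (growth_space (\<beta>+1)) (growth_norm (\<beta>+1)) (M_op g)"
  then obtain C where MS: "\<forall>f\<in>growth_space \<gamma>. M_op g f \<in> growth_space (\<beta>+1)"
    and C: "\<forall>f\<in>growth_space \<gamma>. growth_norm (\<beta>+1) (M_op g f) \<le> C * growth_norm \<gamma> f"
    unfolding bounded_op_def by blast
  define m where "m = nat \<lceil>\<gamma>\<rceil>"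
  have gm: "\<gamma> \<le> real m" unfolding m_def by (rule real_nat_ceiling_ge)
  have "wt z powr (\<beta> + 1 - \<gamma>) * cmod (deriv g z) \<le> max C 0 * 2 ^ m" if z: "z \<in> ball 0 1" for z
  proof -
    let ?f = "tf \<gamma> z m"
    have fs: "?f \<in> growth_space \<gamma>" and fn: "growth_norm \<gamma> ?f \<le> 2 ^ m"
      using tf_space[OF z _ gm] c by auto
    have "wt z powr (\<beta> + 1) * cmod (M_op g ?f z) \<le> growth_norm (\<beta>+1) (M_op g ?f)"
      using gn_upper[OF MS[rule_format, OF fs] z] .
    also have "\<dots> \<le> C * growth_norm \<gamma> ?f" using C fs by blast
    also have "\<dots> \<le> max C 0 * growth_norm \<gamma> ?f" using gn_nonneg[OF fs] by (intro mult_right_mono) auto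
    also have "\<dots> \<le> max C 0 * 2 ^ m" using fn by (intro mult_left_mono) auto
    finally have 1: "wt z powr (\<beta> + 1) * cmod (M_op g ?f z) \<le> max C 0 * 2 ^ m" .
    have "wt z powr (\<beta> + 1) * cmod (M_op g ?f z) = (wt z powr (\<beta> + 1) * wt z powr (- \<gamma>)) * cmod (deriv g z)"
      using wt_pos[OF z] by (simp add: M_op_def tf_at[OF z] norm_mult mult_ac)
    also have "wt z powr (\<beta> + 1) * wt z powr (- \<gamma>) = wt z powr (\<beta> + 1 - \<gamma>)"
      by (simp add: powr_add[symmetric])
    finally show ?thesis using 1 by simp
  qed
  then show "\<exists>C. \<forall>z\<in>ball 0 1. (1 - (cmod z)^2) powr (\<beta> + 1 - \<gamma>) * cmod (deriv g z) \<le> C" by blast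
next
  assume "\<exists>C. \<forall>z\<in>ball 0 1. (1 - (cmod z)^2) powr (\<beta> + 1 - \<gamma>) * cmod (deriv g z) \<le> C"
  then obtain C where C: "\<And>z. z \<in> ball 0 1 \<Longrightarrow> wt z powr (\<beta> + 1 - \<gamma>) * cmod (deriv g z) \<le> C" by blast
  have C0: "0 \<le> C" by (rule K_nonneg[OF C])
  have *: "M_op g f \<in> growth_space (\<beta>+1) \<and> growth_norm (\<beta>+1) (M_op g f) \<le> C * growth_norm \<gamma> f"
    if f: "f \<in> growth_space \<gamma>" for f
  proof -
    have main: "wt z powr (\<beta> + 1) * cmod (M_op g f z) \<le> C * growth_norm \<gamma> f" if z: "z \<in> ball 0 1" for z
    proof -
      have "wt z powr (\<beta> + 1) * cmod (M_op g f z) = (wt z powr (\<beta> + 1 - \<gamma>) * cmod (deriv g z)) * (wt z powr \<gamma> * cmod (f z))"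
        using wt_pos[OF z] by (simp add: M_op_def norm_mult powr_add[symmetric] mult_ac)
      also have "\<dots> \<le> C * growth_norm \<gamma> f"
        using C[OF z] gn_upper[OF f z] C0 by (intro mult_mono) auto
      finally show ?thesis .
    qed
    show ?thesis using gs_intro[OF M_hol[OF gs_hol[OF f] hg] main] gn_least[OF main] by blast
  qed
  then show "bounded_op (growth_space \<gamma>) (growth_norm \<gamma>) (growth_space (\<beta>+1)) (growth_norm (\<beta>+1)) (M_op g)"
    unfolding bounded_op_def by blast
qed



abbreviation UB :: "real \<Rightarrow> (complex \<Rightarrow> complex) set" where
  "UB c \<equiv> {f \<in> bloch_type c. bloch_norm c f \<le> 1}"

lemma hol_deriv_at: "f holomorphic_on ball 0 1 \<Longrightarrow> z \<in> ball 0 1 \<Longrightarrow> f field_differentiable at z"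
  using holomorphic_on_imp_differentiable_at open_ball by blast

lemma UB_bound:
  assumes f: "f \<in> UB c" and z: "z \<in> ball 0 1" and c: "c \<ge> 0"
  shows "cmod (f z) \<le> 1 + 1 / wt z powr c"
proof -
  have fb: "f \<in> bloch_type c" and n: "bloch_norm c f \<le> 1" using f by auto
  have K: "wt u powr c * cmod (deriv f u) \<le> bloch_norm c f - cmod (f 0)" if "u \<in> ball 0 1" for u
    using bn_upper[OF fb that] .
  have K0: "0 \<le> bloch_norm c f - cmod (f 0)" by (rule K_nonneg[OF K])
  have "wt z powr c * cmod (f z - f 0) \<le> (bloch_norm c f - cmod (f 0)) * cmod z"
    by (rule crude[OF bt_hol[OF fb] z c K])
  also have "\<dots> \<le> 1" using K0 n z by (smt (verit) mem_ball_0 mult_left_le norm_ge_zero)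
  finally have "wt z powr c * cmod (f z - f 0) \<le> 1" .
  then have 1: "cmod (f z - f 0) \<le> 1 / wt z powr c" using wt_pos[OF z] by (simp add: field_simps mult.commute)
  have "cmod (f z) \<le> cmod (f 0) + cmod (f z - f 0)" by (rule norm_triangle_sub)
  moreover have "cmod (f 0) \<le> 1" using bn_f0[OF fb] n by linarith
  ultimately show ?thesis using 1 by linarith
qed

lemma zero_UB: "(\<lambda>_. 0) \<in> UB c"
proof -
  have "bloch_norm c (\<lambda>_. 0) \<le> cmod 0 + 0" by (rule bn_least) simp
  then show ?thesis by (auto intro!: bt_intro[where B=0])
qed

lemma pe_bdd: "z \<in> ball 0 1 \<Longrightarrow> c \<ge> 0 \<Longrightarrow> bdd_above ((\<lambda>f. cmod (f z)) ` UB c)"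
  using UB_bound by (intro bdd_aboveI2) blast

lemma pe_upper: "f \<in> UB c \<Longrightarrow> z \<in> ball 0 1 \<Longrightarrow> c \<ge> 0 \<Longrightarrow> cmod (f z) \<le> point_eval_norm c z"
  unfolding point_eval_norm_def by (rule cSUP_upper[OF _ pe_bdd])

lemma pe_least: "(\<And>f. f \<in> UB c \<Longrightarrow> cmod (f z) \<le> B) \<Longrightarrow> point_eval_norm c z \<le> B"
  unfolding point_eval_norm_def using zero_UB by (intro cSUP_least) auto

lemma pe_nonneg: "z \<in> ball 0 1 \<Longrightarrow> c \<ge> 0 \<Longrightarrow> 0 \<le> point_eval_norm c z"
  using pe_upper[OF zero_UB] by fastforce

lemma pe_scaled:
  assumes f: "f \<in> bloch_type c" and z: "z \<in> ball 0 1" and c: "c \<ge> 0"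
  shows "cmod (f z) \<le> point_eval_norm c z * bloch_norm c f"
proof -
  define n where "n = bloch_norm c f"
  define p where "p = point_eval_norm c z"
  have n0: "0 \<le> n" using bn_nonneg[OF f] by (simp add: n_def)
  have p0: "0 \<le> p" using pe_nonneg[OF z c] by (simp add: p_def)
  have t: "cmod (f z) \<le> p * t" if t: "n < t" for t
  proof -
    have tp: "0 < t" using t n0 by linarith
    let ?h = "\<lambda>w. f w / of_real t"
    have hh: "?h holomorphic_on ball 0 1" using bt_hol[OF f] by (intro holomorphic_intros) auto
    have dh: "deriv ?h u = deriv f u / of_real t" if "u \<in> ball 0 1" for u
      by (rule deriv_cdivide_right[OF hol_deriv_at[OF bt_hol[OF f] that]])
    have B: "wt u powr c * cmod (deriv ?h u) \<le> (n - cmod (f 0)) / t" if u: "u \<in> ball 0 1" for u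
    proof -
      have "wt u powr c * cmod (deriv ?h u) = (wt u powr c * cmod (deriv f u)) / t"
        using tp by (simp add: dh[OF u] norm_divide)
      also have "\<dots> \<le> (n - cmod (f 0)) / t"
        using bn_upper[OF f u] tp by (intro divide_right_mono) (auto simp: n_def)
      finally show ?thesis .
    qed
    have "bloch_norm c ?h \<le> cmod (?h 0) + (n - cmod (f 0)) / t" by (rule bn_least[OF B])
    also have "\<dots> = n / t" using tp by (simp add: norm_divide diff_divide_distrib)
    also have "\<dots> \<le> 1" using t tp by simp
    finally have "?h \<in> UB c" using bt_intro[OF hh B] by blast
    from pe_upper[OF this z c] have "cmod (f z) / t \<le> p" using tp by (simp add: p_def norm_divide)
    then show ?thesis using tp by (simp add: field_simps mult.commute)
  qed
  show ?thesis unfolding n_def[symmetric] p_def[symmetric]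
  proof (rule field_le_epsilon)
    fix e :: real assume e: "0 < e"
    have "cmod (f z) \<le> p * (n + e / (p + 1))" using e p0 by (intro t) simp
    also have "\<dots> = p * n + e * (p / (p + 1))" using p0 by (simp add: field_simps)
    also have "\<dots> \<le> p * n + e * 1" using p0 e by (intro add_left_mono mult_left_mono) auto
    finally show "cmod (f z) \<le> p * n + e" by simp
  qed
qed

lemma part7:
  assumes hg: "g holomorphic_on ball 0 1" and b: "\<beta> > 0" and c: "\<gamma> > 0"
  shows "bounded_op (bloch_type \<gamma>) (bloch_norm \<gamma>) (growth_space \<beta>) (growth_norm \<beta>) (M_op g)
       \<longleftrightarrow> (\<exists>C. \<forall>z\<in>ball 0 1. (1 - (cmod z)^2) powr \<beta> * point_eval_norm \<gamma> z * cmod (deriv g z) \<le> C)"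
proof
  assume "bounded_op (bloch_type \<gamma>) (bloch_norm \<gamma>) (growth_space \<beta>) (growth_norm \<beta>) (M_op g)"
  then obtain C where MS: "\<forall>f\<in>bloch_type \<gamma>. M_op g f \<in> growth_space \<beta>"
    and C: "\<forall>f\<in>bloch_type \<gamma>. growth_norm \<beta> (M_op g f) \<le> C * bloch_norm \<gamma> f"
    unfolding bounded_op_def by blast
  have "wt z powr \<beta> * point_eval_norm \<gamma> z * cmod (deriv g z) \<le> max C 0" if z: "z \<in> ball 0 1" for z
  proof (cases "cmod (deriv g z) = 0")
    case True then show ?thesis by simp
  next
    case False
    define A where "A = wt z powr \<beta> * cmod (deriv g z)"
    have A: "0 < A" using False wt_pos[OF z] by (simp add: A_def)
    have "cmod (f z) \<le> max C 0 / A" if f: "f \<in> UB \<gamma>" for f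
    proof -
      have fb: "f \<in> bloch_type \<gamma>" and n: "bloch_norm \<gamma> f \<le> 1" using f by auto
      have "cmod (f z) * A = wt z powr \<beta> * cmod (M_op g f z)" by (simp add: A_def M_op_def norm_mult mult_ac)
      also have "\<dots> \<le> growth_norm \<beta> (M_op g f)" by (rule gn_upper[OF MS[rule_format, OF fb] z])
      also have "\<dots> \<le> C * bloch_norm \<gamma> f" using C fb by blast
      also have "\<dots> \<le> max C 0 * bloch_norm \<gamma> f" using bn_nonneg[OF fb] by (intro mult_right_mono) auto
      also have "\<dots> \<le> max C 0 * 1" using n by (intro mult_left_mono) auto
      finally show ?thesis using A by (simp add: field_simps)
    qed
    then have "point_eval_norm \<gamma> z \<le> max C 0 / A" by (rule pe_least)
    then have "A * point_eval_norm \<gamma> z \<le> max C 0" using A by (simp add: field_simps)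
    then show ?thesis by (simp add: A_def mult_ac)
  qed
  then show "\<exists>C. \<forall>z\<in>ball 0 1. (1 - (cmod z)^2) powr \<beta> * point_eval_norm \<gamma> z * cmod (deriv g z) \<le> C" by blast
next
  assume "\<exists>C. \<forall>z\<in>ball 0 1. (1 - (cmod z)^2) powr \<beta> * point_eval_norm \<gamma> z * cmod (deriv g z) \<le> C"
  then obtain C where C: "\<And>z. z \<in> ball 0 1 \<Longrightarrow> wt z powr \<beta> * point_eval_norm \<gamma> z * cmod (deriv g z) \<le> C" by blast
  have C0: "0 \<le> C" using C[of 0] pe_nonneg[of 0 \<gamma>] c by (smt (verit) centre_in_ball mult_nonneg_nonneg norm_ge_zero powr_ge_zero zero_less_one)
  have *: "M_op g f \<in> growth_space \<beta> \<and> growth_norm \<beta> (M_op g f) \<le> C * bloch_norm \<gamma> f"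
    if f: "f \<in> bloch_type \<gamma>" for f
  proof -
    have main: "wt z powr \<beta> * cmod (M_op g f z) \<le> C * bloch_norm \<gamma> f" if z: "z \<in> ball 0 1" for z
    proof -
      have "wt z powr \<beta> * cmod (M_op g f z) = (wt z powr \<beta> * cmod (deriv g z)) * cmod (f z)"
        by (simp add: M_op_def norm_mult mult_ac)
      also have "\<dots> \<le> (wt z powr \<beta> * cmod (deriv g z)) * (point_eval_norm \<gamma> z * bloch_norm \<gamma> f)"
        using pe_scaled[OF f z] c by (intro mult_left_mono) auto
      also have "\<dots> = (wt z powr \<beta> * point_eval_norm \<gamma> z * cmod (deriv g z)) * bloch_norm \<gamma> f"
        by (simp add: mult_ac)
      also have "\<dots> \<le> C * bloch_norm \<gamma> f" using C[OF z] bn_nonneg[OF f] by (intro mult_right_mono) auto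
      finally show ?thesis .
    qed
    show ?thesis using gs_intro[OF M_hol[OF bt_hol[OF f] hg] main] gn_least[OF main] by blast
  qed
  then show "bounded_op (bloch_type \<gamma>) (bloch_norm \<gamma>) (growth_space \<beta>) (growth_norm \<beta>) (M_op g)"
    unfolding bounded_op_def by blast
qed



lemma pe_ge1: "z \<in> ball 0 1 \<Longrightarrow> c \<ge> 0 \<Longrightarrow> 1 \<le> point_eval_norm c z"
proof -
  assume z: "z \<in> ball 0 1" and c: "c \<ge> 0"
  have "bloch_norm c (\<lambda>_. 1) \<le> cmod 1 + 0" by (rule bn_least) simp
  then have "(\<lambda>_. 1) \<in> UB c" by (auto intro!: bt_intro[where B=0])
  from pe_upper[OF this z c] show ?thesis by simp
qed

lemma UB_K:
  assumes f: "f \<in> UB c"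
  shows "\<And>u. u \<in> ball 0 1 \<Longrightarrow> wt u powr c * cmod (deriv f u) \<le> bloch_norm c f - cmod (f 0)"
    and "bloch_norm c f - cmod (f 0) \<le> 1 - cmod (f 0)" "cmod (f 0) \<le> 1"
    and "0 \<le> bloch_norm c f - cmod (f 0)" "bloch_norm c f - cmod (f 0) \<le> 1"
proof -
  have fb: "f \<in> bloch_type c" and n: "bloch_norm c f \<le> 1" using f by auto
  show K: "\<And>u. u \<in> ball 0 1 \<Longrightarrow> wt u powr c * cmod (deriv f u) \<le> bloch_norm c f - cmod (f 0)"
    using bn_upper[OF fb] .
  show "bloch_norm c f - cmod (f 0) \<le> 1 - cmod (f 0)" using n by simp
  show "cmod (f 0) \<le> 1" using bn_f0[OF fb] n by linarith
  show "0 \<le> bloch_norm c f - cmod (f 0)" by (rule K_nonneg[OF K])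
  show "bloch_norm c f - cmod (f 0) \<le> 1" using n norm_ge_zero[of "f 0"] by linarith
qed

lemma pe_up_lt1:
  assumes z: "z \<in> ball 0 1" and b: "0 < \<beta>" "\<beta> < 1"
  shows "point_eval_norm \<beta> z \<le> 1 + 1 / (1 - \<beta>)"
proof (rule pe_least)
  fix f assume f: "f \<in> UB \<beta>"
  note K = UB_K[OF f]
  have fh: "f holomorphic_on ball 0 1" using f by (auto intro: bt_hol)
  define k where "k = bloch_norm \<beta> f - cmod (f 0)"
  define r where "r = cmod z"
  have "cmod (f z - f 0) \<le> k * ((1 - r) powr (1 - \<beta>) - 1) / (\<beta> - 1)"
    unfolding k_def r_def by (rule int_bound_pow[OF fh z _ _ K(1)]) (use f b in auto)
  also have "\<dots> = k * (1 - (1 - r) powr (1 - \<beta>)) / (1 - \<beta>)"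
  proof -
    have "\<beta> - 1 \<noteq> 0" "1 - \<beta> \<noteq> 0" using b by auto
    then show ?thesis by (simp add: field_simps)
  qed
  also have "\<dots> \<le> k * 1 / (1 - \<beta>)"
    using b K(4) by (intro divide_right_mono mult_left_mono) (auto simp: k_def)
  also have "\<dots> \<le> 1 / (1 - \<beta>)" using b K(5) by (intro divide_right_mono) (auto simp: k_def)
  finally have "cmod (f z - f 0) \<le> 1 / (1 - \<beta>)" .
  then show "cmod (f z) \<le> 1 + 1 / (1 - \<beta>)" using norm_triangle_sub[of "f z" "f 0"] K(3) by linarith
qed

lemma pe_up_eq1:
  assumes z: "z \<in> ball 0 1"
  shows "point_eval_norm 1 z \<le> 1 + ln (1 / (1 - cmod z))"
proof (rule pe_least)
  fix f assume f: "f \<in> UB 1"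
  note K = UB_K[OF f]
  have fh: "f holomorphic_on ball 0 1" using f by (auto intro: bt_hol)
  have l0: "0 \<le> ln (1 / (1 - cmod z))" using z by simp
  have "cmod (f z - f 0) \<le> (bloch_norm 1 f - cmod (f 0)) * ln (1 / (1 - cmod z))"
    by (rule int_bound_log[OF fh z K(1)])
  also have "\<dots> \<le> 1 * ln (1 / (1 - cmod z))" using K(5) l0 by (intro mult_right_mono) auto
  finally show "cmod (f z) \<le> 1 + ln (1 / (1 - cmod z))" using norm_triangle_sub[of "f z" "f 0"] K(3) by linarith
qed

lemma pe_up_gt1:
  assumes z: "z \<in> ball 0 1" and b: "1 < \<beta>"
  shows "point_eval_norm \<beta> z \<le> 1 + (1 - cmod z) powr (1 - \<beta>) / (\<beta> - 1)"
proof (rule pe_least)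
  fix f assume f: "f \<in> UB \<beta>"
  note K = UB_K[OF f]
  have fh: "f holomorphic_on ball 0 1" using f by (auto intro: bt_hol)
  define k where "k = bloch_norm \<beta> f - cmod (f 0)"
  define r where "r = cmod z"
  have "cmod (f z - f 0) \<le> k * ((1 - r) powr (1 - \<beta>) - 1) / (\<beta> - 1)"
    unfolding k_def r_def by (rule int_bound_pow[OF fh z _ _ K(1)]) (use f b in auto)
  also have "\<dots> \<le> k * (1 - r) powr (1 - \<beta>) / (\<beta> - 1)"
    using b K(4) by (intro divide_right_mono mult_left_mono) (auto simp: k_def)
  also have "\<dots> \<le> 1 * (1 - r) powr (1 - \<beta>) / (\<beta> - 1)"
    using b K(5) by (intro divide_right_mono mult_right_mono) (auto simp: k_def)
  finally have "cmod (f z - f 0) \<le> (1 - cmod z) powr (1 - \<beta>) / (\<beta> - 1)" by (simp add: r_def)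
  then show "cmod (f z) \<le> 1 + (1 - cmod z) powr (1 - \<beta>) / (\<beta> - 1)"
    using norm_triangle_sub[of "f z" "f 0"] K(3) by linarith
qed

lemma Re_pos_den: "a \<in> ball 0 1 \<Longrightarrow> w \<in> ball 0 1 \<Longrightarrow> 1 - cnj a * w \<notin> \<real>\<^sub>\<le>\<^sub>0"
proof -
  assume a: "a \<in> ball 0 1" and w: "w \<in> ball 0 1"
  have "cmod (cnj a * w) < 1" using a w by (simp add: norm_mult mult_le_one mult_strict_mono' le_less_trans[OF mult_left_le_one_le])
  then have "Re (cnj a * w) < 1" using complex_Re_le_cmod le_less_trans by blast
  then have "0 < Re (1 - cnj a * w)" by simp
  then show ?thesis by (auto simp: complex_nonpos_Reals_iff)
qed

lemma pe_low_log:
  assumes a: "a \<in> ball 0 1"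
  shows "ln (1 / wt a) \<le> 2 * point_eval_norm 1 a"
proof -
  define f where "f = (\<lambda>w. - Ln (1 - cnj a * w))"
  have df: "(f has_field_derivative cnj a / (1 - cnj a * w)) (at w)" if w: "w \<in> ball 0 1" for w
  proof -
    have "((\<lambda>w. 1 - cnj a * w) has_field_derivative - cnj a) (at w)"
      by (auto intro!: derivative_eq_intros)
    from DERIV_chain2[OF has_field_derivative_Ln[OF Re_pos_den[OF a w]] this]
    have "((\<lambda>w. Ln (1 - cnj a * w)) has_field_derivative inverse (1 - cnj a * w) * - cnj a) (at w)" .
    then have "(f has_field_derivative - (inverse (1 - cnj a * w) * - cnj a)) (at w)"
      unfolding f_def by (rule DERIV_minus)
    then show ?thesis by (simp add: divide_inverse mult.commute)
  qed
  have hf: "f holomorphic_on ball 0 1" using df holomorphic_on_open open_ball by blast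
  have B: "wt w powr 1 * cmod (deriv f w) \<le> 2" if w: "w \<in> ball 0 1" for w
  proof -
    define D where "D = cmod (1 - cnj a * w)"
    have D: "0 < D" using den_nz[OF a w] by (simp add: D_def)
    have "wt w powr 1 * cmod (deriv f w) = wt w * cmod a / D"
      using wt_pos[OF w] DERIV_imp_deriv[OF df[OF w]] by (simp add: norm_divide D_def)
    also have "\<dots> \<le> (2 * D) * 1 / D"
      using key_ineq(1)[OF a w] wt_pos[OF w] a D by (intro divide_right_mono mult_mono) (auto simp: D_def)
    also have "\<dots> = 2" using D by simp
    finally show ?thesis .
  qed
  have fb: "f \<in> bloch_type 1" by (rule bt_intro[OF hf B])
  have "bloch_norm 1 f \<le> cmod (f 0) + 2" by (rule bn_least[OF B])
  then have n: "bloch_norm 1 f \<le> 2" by (simp add: f_def)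
  have eq: "1 - cnj a * a = of_real (wt a)" using complex_norm_square[of a] by (simp add: mult.commute)
  have "f a = - Ln (of_real (wt a))" unfolding f_def by (simp only: eq)
  also have "Ln (of_real (wt a)) = of_real (ln (wt a))" by (rule Ln_of_real) (use wt_pos[OF a] in auto)
  finally have "f a = - of_real (ln (wt a))" .
  then have "ln (1 / wt a) = cmod (f a)" using wt_pos[OF a] by (simp add: ln_div)
  also have "\<dots> \<le> point_eval_norm 1 a * bloch_norm 1 f" by (rule pe_scaled[OF fb a]) simp
  also have "\<dots> \<le> point_eval_norm 1 a * 2" using n pe_nonneg[OF a] by (intro mult_left_mono) auto
  finally show ?thesis by simp
qed



lemma alg_aux:
  fixes q X y :: complex
  assumes q: "q \<noteq> 0"
  shows "(0 * q ^ m - X * (of_nat m * q ^ (m - 1) * - y)) / (q ^ m * q ^ m) = X * (of_nat m * y) / q ^ (m + 1)"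
proof (cases m)
  case 0 then show ?thesis by simp
next
  case (Suc k)
  have e: "q ^ m * q ^ m = q ^ k * q ^ (m + 1)" unfolding Suc by (simp add: power_add[symmetric])
  have "(0 * q ^ m - X * (of_nat m * q ^ (m - 1) * - y)) = q ^ k * (X * (of_nat m * y))"
    by (simp add: Suc mult_ac)
  then have "(0 * q ^ m - X * (of_nat m * q ^ (m - 1) * - y)) / (q ^ m * q ^ m) = (q ^ k * (X * (of_nat m * y))) / (q ^ k * q ^ (m + 1))"
    by (simp only: e)
  also have "\<dots> = X * (of_nat m * y) / q ^ (m + 1)" using q by (simp add: power_eq_0_iff)
  finally show ?thesis .
qed

lemma tf_deriv:
  assumes a: "a \<in> ball 0 1" and w: "w \<in> ball 0 1"
  shows "(tf c a m has_field_derivative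
     of_real (wt a powr (real m - c)) * (of_nat m * cnj a) / (1 - cnj a * w) ^ (m + 1)) (at w)"
proof -
  define q where "q = 1 - cnj a * w"
  define X :: complex where "X = of_real (wt a powr (real m - c))"
  have q: "q \<noteq> 0" using den_nz[OF a w] by (auto simp: q_def)
  have d1: "((\<lambda>w. 1 - cnj a * w) has_field_derivative - cnj a) (at w)"
    by (auto intro!: derivative_eq_intros)
  have d2: "((\<lambda>w. (1 - cnj a * w) ^ m) has_field_derivative of_nat m * (1 - cnj a * w) ^ (m - 1) * - cnj a) (at w)"
    using DERIV_power[OF d1, of m] by (simp add: mult_ac)
  have d3: "((\<lambda>w. X / (1 - cnj a * w) ^ m) has_field_derivative
      (0 * q ^ m - X * (of_nat m * q ^ (m - 1) * - cnj a)) / (q ^ m * q ^ m)) (at w)"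
    unfolding q_def by (rule DERIV_divide[OF DERIV_const d2]) (use q in \<open>simp add: q_def\<close>)
  show ?thesis unfolding tf_def X_def[symmetric] using d3 alg_aux[OF q, where X=X and m=m and y="cnj a"] by (simp add: q_def)
qed

lemma pe_low_gt1:
  assumes a: "a \<in> ball 0 1" and b: "1 < \<beta>"
  shows "wt a powr (1 - \<beta>) \<le> (1 + real (nat \<lceil>\<beta>\<rceil>) * 2 ^ (nat \<lceil>\<beta>\<rceil> + 1)) * point_eval_norm \<beta> a"
proof -
  define m where "m = nat \<lceil>\<beta>\<rceil>"
  have bm: "\<beta> \<le> real m" unfolding m_def by (rule real_nat_ceiling_ge)
  define f where "f = tf (\<beta> - 1) a m"
  define C where "C = wt a powr (real m - (\<beta> - 1))"
  have C0: "0 \<le> C" by (simp add: C_def)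
  have C1: "C \<le> 1" unfolding C_def using powr_mono2[of "real m - (\<beta> - 1)" "wt a" 1] wt_pos[OF a] bm by simp
  have df: "(f has_field_derivative of_real C * (of_nat m * cnj a) / (1 - cnj a * w) ^ (m + 1)) (at w)"
    if w: "w \<in> ball 0 1" for w
    unfolding f_def C_def by (rule tf_deriv[OF a w])
  have hf: "f holomorphic_on ball 0 1" unfolding f_def by (rule tf_hol[OF a])
  have B: "wt w powr \<beta> * cmod (deriv f w) \<le> real m * 2 ^ (m + 1)" if w: "w \<in> ball 0 1" for w
  proof -
    define D where "D = cmod (1 - cnj a * w)"
    have D: "0 < D" using den_nz[OF a w] by (simp add: D_def)
    have "wt w powr \<beta> \<le> (2 * D) powr \<beta>"
      using key_ineq(1)[OF a w] wt_pos[OF w] b by (intro powr_mono2) (auto simp: D_def)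
    moreover have "C \<le> (2 * D) powr (real m - (\<beta> - 1))"
      unfolding C_def using key_ineq(2)[OF a w] wt_pos[OF a] bm by (intro powr_mono2) (auto simp: D_def)
    ultimately have "wt w powr \<beta> * C \<le> (2 * D) powr \<beta> * (2 * D) powr (real m - (\<beta> - 1))"
      using C0 by (intro mult_mono) auto
    also have "\<dots> = (2 * D) powr (\<beta> + (real m - (\<beta> - 1)))" by (rule powr_add[symmetric])
    also have "\<beta> + (real m - (\<beta> - 1)) = real (m + 1)" by simp
    also have "(2 * D) powr real (m + 1) = (2 * D) ^ (m + 1)" using D by (intro powr_realpow) simp
    also have "(2 * D) ^ (m + 1) = 2 ^ (m + 1) * D ^ (m + 1)" by (rule power_mult_distrib)
    finally have 1: "wt w powr \<beta> * C \<le> 2 ^ (m + 1) * D ^ (m + 1)" .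
    have "wt w powr \<beta> * cmod (deriv f w) = (wt w powr \<beta> * C) * (real m * cmod a) / D ^ (m + 1)"
      using C0 by (simp add: DERIV_imp_deriv[OF df[OF w]] norm_divide norm_mult norm_power D_def)
    also have "\<dots> \<le> (2 ^ (m + 1) * D ^ (m + 1)) * (real m * 1) / D ^ (m + 1)"
    proof (rule divide_right_mono)
      show "wt w powr \<beta> * C * (real m * cmod a) \<le> 2 ^ (m + 1) * D ^ (m + 1) * (real m * 1)"
        by (rule mult_mono[OF 1]) (use a D in \<open>auto intro: mult_right_le_one_le\<close>)
    qed (use D in simp)
    also have "\<dots> = real m * 2 ^ (m + 1)" using D by simp
    finally show ?thesis .
  qed
  have fb: "f \<in> bloch_type \<beta>" by (rule bt_intro[OF hf B])
  have "bloch_norm \<beta> f \<le> cmod (f 0) + real m * 2 ^ (m + 1)" by (rule bn_least[OF B])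
  also have "cmod (f 0) = C" using C0 by (simp add: f_def tf_def C_def)
  finally have n: "bloch_norm \<beta> f \<le> 1 + real m * 2 ^ (m + 1)" using C1 by linarith
  have "wt a powr (1 - \<beta>) = cmod (f a)" unfolding f_def tf_at[OF a] by simp
  also have "\<dots> \<le> point_eval_norm \<beta> a * bloch_norm \<beta> f" by (rule pe_scaled[OF fb a]) (use b in simp)
  also have "\<dots> \<le> point_eval_norm \<beta> a * (1 + real m * 2 ^ (m + 1))"
    using n pe_nonneg[OF a] b by (intro mult_left_mono) auto
  finally show ?thesis by (simp add: m_def mult.commute)
qed

lemma deriv_bound_compact:
  assumes hg: "g holomorphic_on ball 0 1" and r: "r < 1"
  shows "\<exists>M. \<forall>z. cmod z \<le> r \<longrightarrow> cmod (deriv g z) \<le> M"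
proof -
  have "deriv g holomorphic_on ball 0 1" by (rule holomorphic_deriv[OF hg open_ball])
  moreover have "cball 0 r \<subseteq> ball (0::complex) 1" using r by auto
  ultimately have "continuous_on (cball 0 r) (deriv g)"
    using holomorphic_on_imp_continuous_on continuous_on_subset by blast
  then have "compact (deriv g ` cball 0 r)" by (rule compact_continuous_image) simp
  then obtain M where M: "\<forall>x\<in>deriv g ` cball 0 r. norm x \<le> M"
    using compact_imp_bounded[of "deriv g ` cball 0 r"] unfolding bounded_iff by blast
  show ?thesis by (rule exI[of _ M]) (use M in auto)
qed



lemma wt_p1: "z \<in> ball 0 1 \<Longrightarrow> wt z powr 1 = wt z"
  using wt_pos[of z] by (intro powr_one) auto

lemma part8_lt1:
  assumes hg: "g holomorphic_on ball 0 1" and b: "0 < \<beta>" "\<beta> < 1"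
  shows "(\<exists>C. \<forall>z\<in>ball 0 1. wt z powr \<beta> * point_eval_norm \<beta> z * cmod (deriv g z) \<le> C) \<longleftrightarrow> g \<in> bloch_type \<beta>"
proof
  assume "\<exists>C. \<forall>z\<in>ball 0 1. wt z powr \<beta> * point_eval_norm \<beta> z * cmod (deriv g z) \<le> C"
  then obtain C where C: "\<And>z. z \<in> ball 0 1 \<Longrightarrow> wt z powr \<beta> * point_eval_norm \<beta> z * cmod (deriv g z) \<le> C" by blast
  have "wt z powr \<beta> * cmod (deriv g z) \<le> C" if z: "z \<in> ball 0 1" for z
  proof -
    have "wt z powr \<beta> * cmod (deriv g z) = 1 * (wt z powr \<beta> * cmod (deriv g z))" by simp
    also have "\<dots> \<le> point_eval_norm \<beta> z * (wt z powr \<beta> * cmod (deriv g z))"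
      using pe_ge1[OF z] b by (intro mult_right_mono) auto
    also have "\<dots> \<le> C" using C[OF z] by (simp add: mult_ac)
    finally show ?thesis .
  qed
  then show "g \<in> bloch_type \<beta>" by (rule bt_intro[OF hg])
next
  assume "g \<in> bloch_type \<beta>"
  then obtain C where C: "\<And>z. z \<in> ball 0 1 \<Longrightarrow> wt z powr \<beta> * cmod (deriv g z) \<le> C"
    unfolding bloch_type_def by blast
  have "wt z powr \<beta> * point_eval_norm \<beta> z * cmod (deriv g z) \<le> (1 + 1 / (1 - \<beta>)) * C" if z: "z \<in> ball 0 1" for z
  proof -
    have "wt z powr \<beta> * point_eval_norm \<beta> z * cmod (deriv g z) = point_eval_norm \<beta> z * (wt z powr \<beta> * cmod (deriv g z))"
      by (simp add: mult_ac)
    also have "\<dots> \<le> (1 + 1 / (1 - \<beta>)) * C"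
      using pe_up_lt1[OF z b] C[OF z] pe_nonneg[OF z] b by (intro mult_mono) auto
    finally show ?thesis .
  qed
  then show "\<exists>C. \<forall>z\<in>ball 0 1. wt z powr \<beta> * point_eval_norm \<beta> z * cmod (deriv g z) \<le> C" by blast
qed

lemma part8_gt1:
  assumes hg: "g holomorphic_on ball 0 1" and b: "1 < \<beta>"
  shows "(\<exists>C. \<forall>z\<in>ball 0 1. wt z powr \<beta> * point_eval_norm \<beta> z * cmod (deriv g z) \<le> C) \<longleftrightarrow> g \<in> bloch"
proof
  assume "\<exists>C. \<forall>z\<in>ball 0 1. wt z powr \<beta> * point_eval_norm \<beta> z * cmod (deriv g z) \<le> C"
  then obtain C where C: "\<And>z. z \<in> ball 0 1 \<Longrightarrow> wt z powr \<beta> * point_eval_norm \<beta> z * cmod (deriv g z) \<le> C" by blast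
  define N where "N = 1 + real (nat \<lceil>\<beta>\<rceil>) * 2 ^ (nat \<lceil>\<beta>\<rceil> + 1)"
  have N0: "0 \<le> N" by (simp add: N_def)
  have "wt z powr 1 * cmod (deriv g z) \<le> N * C" if z: "z \<in> ball 0 1" for z
  proof -
    have "wt z powr 1 * cmod (deriv g z) = wt z powr \<beta> * wt z powr (1 - \<beta>) * cmod (deriv g z)"
      using wt_pos[OF z] by (simp add: powr_add[symmetric])
    also have "\<dots> \<le> wt z powr \<beta> * (N * point_eval_norm \<beta> z) * cmod (deriv g z)"
      using pe_low_gt1[OF z b] by (intro mult_right_mono mult_left_mono) (auto simp: N_def)
    also have "\<dots> = N * (wt z powr \<beta> * point_eval_norm \<beta> z * cmod (deriv g z))" by (simp add: mult_ac)
    also have "\<dots> \<le> N * C" using C[OF z] N0 by (intro mult_left_mono) auto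
    finally show ?thesis .
  qed
  then show "g \<in> bloch" unfolding bloch_def by (rule bt_intro[OF hg])
next
  assume "g \<in> bloch"
  then obtain C where C: "\<And>z. z \<in> ball 0 1 \<Longrightarrow> wt z powr 1 * cmod (deriv g z) \<le> C"
    unfolding bloch_def bloch_type_def by blast
  have C0: "0 \<le> C" by (rule K_nonneg[OF C])
  define K2 where "K2 = 1 / 2 powr (1 - \<beta>) / (\<beta> - 1)"
  have K20: "0 \<le> K2" using b by (simp add: K2_def)
  have "wt z powr \<beta> * point_eval_norm \<beta> z * cmod (deriv g z) \<le> (1 + K2) * C" if z: "z \<in> ball 0 1" for z
  proof -
    define r where "r = cmod z"
    have w: "0 < wt z" "wt z \<le> 1" using wt_pos[OF z] by auto
    have "wt z / 2 \<le> 1 - r" using wt_le2[OF z] by (simp add: r_def)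
    then have "(1 - r) powr (1 - \<beta>) \<le> (wt z / 2) powr (1 - \<beta>)"
      using b w by (intro powr_mono2') auto
    also have "\<dots> = wt z powr (1 - \<beta>) / 2 powr (1 - \<beta>)" by (rule powr_divide)
    finally have "(1 - r) powr (1 - \<beta>) / (\<beta> - 1) \<le> wt z powr (1 - \<beta>) / 2 powr (1 - \<beta>) / (\<beta> - 1)"
      using b by (intro divide_right_mono) auto
    also have "\<dots> = K2 * wt z powr (1 - \<beta>)" by (simp add: K2_def)
    finally have pe: "point_eval_norm \<beta> z \<le> 1 + K2 * wt z powr (1 - \<beta>)"
      using pe_up_gt1[OF z b] by (simp add: r_def)
    have g1: "wt z * cmod (deriv g z) \<le> C" using C[OF z] wt_p1[OF z] by simp
    have wb: "wt z powr \<beta> \<le> wt z powr 1" using w b by (intro powr_mono') auto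
    have "wt z powr \<beta> * point_eval_norm \<beta> z * cmod (deriv g z) \<le> wt z powr \<beta> * (1 + K2 * wt z powr (1 - \<beta>)) * cmod (deriv g z)"
      using pe by (intro mult_right_mono mult_left_mono) auto
    also have "\<dots> = wt z powr \<beta> * cmod (deriv g z) + K2 * ((wt z powr \<beta> * wt z powr (1 - \<beta>)) * cmod (deriv g z))"
      by (simp add: algebra_simps)
    also have "wt z powr \<beta> * wt z powr (1 - \<beta>) = wt z" using w by (simp add: powr_add[symmetric])
    also have "wt z powr \<beta> * cmod (deriv g z) \<le> wt z * cmod (deriv g z)"
      using wb wt_p1[OF z] by (intro mult_right_mono) auto
    also have "wt z * cmod (deriv g z) + K2 * (wt z * cmod (deriv g z)) \<le> C + K2 * C"
      using g1 K20 by (intro add_mono mult_left_mono) auto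
    finally show ?thesis by (simp add: algebra_simps)
  qed
  then show "\<exists>C. \<forall>z\<in>ball 0 1. wt z powr \<beta> * point_eval_norm \<beta> z * cmod (deriv g z) \<le> C" by blast
qed

lemma part8_eq1:
  assumes hg: "g holomorphic_on ball 0 1"
  shows "(\<exists>C. \<forall>z\<in>ball 0 1. wt z powr 1 * point_eval_norm 1 z * cmod (deriv g z) \<le> C) \<longleftrightarrow> g \<in> log_bloch"
proof
  assume "\<exists>C. \<forall>z\<in>ball 0 1. wt z powr 1 * point_eval_norm 1 z * cmod (deriv g z) \<le> C"
  then obtain C where C: "\<And>z. z \<in> ball 0 1 \<Longrightarrow> wt z powr 1 * point_eval_norm 1 z * cmod (deriv g z) \<le> C" by blast
  have "wt z * ln (1 / wt z) * cmod (deriv g z) \<le> 2 * C" if z: "z \<in> ball 0 1" for z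
  proof -
    have "wt z * ln (1 / wt z) * cmod (deriv g z) \<le> wt z * (2 * point_eval_norm 1 z) * cmod (deriv g z)"
      using pe_low_log[OF z] wt_pos[OF z] by (intro mult_right_mono mult_left_mono) auto
    also have "\<dots> = 2 * (wt z powr 1 * point_eval_norm 1 z * cmod (deriv g z))" using wt_p1[OF z] by simp
    also have "\<dots> \<le> 2 * C" using C[OF z] by simp
    finally show ?thesis .
  qed
  then show "g \<in> log_bloch" unfolding log_bloch_def using hg by blast
next
  assume "g \<in> log_bloch"
  then obtain C where C: "\<And>z. z \<in> ball 0 1 \<Longrightarrow> wt z * ln (1 / wt z) * cmod (deriv g z) \<le> C"
    unfolding log_bloch_def by blast
  have C0: "0 \<le> C" using C[of 0] by simp
  define \<rho> :: real where "\<rho> = 1 - exp (-1) / 2"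
  have \<rho>: "\<rho> < 1" by (simp add: \<rho>_def)
  obtain M0 where M0: "\<And>z. cmod z \<le> \<rho> \<Longrightarrow> cmod (deriv g z) \<le> M0"
    using deriv_bound_compact[OF hg \<rho>] by blast
  define M where "M = max C M0"
  have Mb: "wt z * cmod (deriv g z) \<le> M" if z: "z \<in> ball 0 1" for z
  proof (cases "1 \<le> ln (1 / wt z)")
    case True
    have "wt z * cmod (deriv g z) = wt z * 1 * cmod (deriv g z)" by simp
    also have "\<dots> \<le> wt z * ln (1 / wt z) * cmod (deriv g z)"
      using True wt_pos[OF z] by (intro mult_right_mono mult_left_mono) auto
    also have "\<dots> \<le> C" by (rule C[OF z])
    finally show ?thesis by (simp add: M_def)
  next
    case False
    have w: "0 < wt z" using wt_pos[OF z] .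
    have "ln (1 / wt z) < 1" using False by simp
    then have "exp (ln (1 / wt z)) < exp 1" by simp
    then have "1 / wt z < exp 1" using w by simp
    then have "1 < exp 1 * wt z" using w by (simp add: divide_less_eq)
    then have "exp (-1) * 1 < exp (-1) * (exp 1 * wt z)" by (intro mult_strict_left_mono) auto
    also have "exp (-1) * (exp 1 * wt z) = wt z" by (simp add: mult.assoc[symmetric] exp_add[symmetric])
    finally have "exp (-1) < wt z" by simp
    then have "cmod z \<le> \<rho>" using wt_le2[OF z] by (simp add: \<rho>_def)
    then have "cmod (deriv g z) \<le> M0" by (rule M0)
    moreover have "wt z * cmod (deriv g z) \<le> 1 * cmod (deriv g z)" using w by (intro mult_right_mono) auto
    ultimately show ?thesis by (simp add: M_def)
  qed
  have "wt z powr 1 * point_eval_norm 1 z * cmod (deriv g z) \<le> (1 + ln 2) * M + C" if z: "z \<in> ball 0 1" for z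
  proof -
    have w: "0 < wt z" using wt_pos[OF z] .
    have r: "0 < 1 - cmod z" using z by simp
    have "1 / (1 - cmod z) \<le> 2 / wt z" using wt_le2[OF z] w r by (simp add: field_simps)
    then have "ln (1 / (1 - cmod z)) \<le> ln (2 / wt z)" using r by (intro ln_mono) auto
    also have "\<dots> = ln 2 + ln (1 / wt z)" using w by (simp add: ln_div)
    finally have pe: "point_eval_norm 1 z \<le> 1 + ln 2 + ln (1 / wt z)" using pe_up_eq1[OF z] by simp
    have "wt z powr 1 * point_eval_norm 1 z * cmod (deriv g z) \<le> wt z * (1 + ln 2 + ln (1 / wt z)) * cmod (deriv g z)"
      using pe w wt_p1[OF z] by (intro mult_right_mono mult_left_mono) auto
    also have "\<dots> = (1 + ln 2) * (wt z * cmod (deriv g z)) + wt z * ln (1 / wt z) * cmod (deriv g z)"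
      by (simp add: algebra_simps)
    also have "\<dots> \<le> (1 + ln 2) * M + C"
      using Mb[OF z] C[OF z] by (intro add_mono mult_left_mono) auto
    finally show ?thesis .
  qed
  then show "\<exists>C. \<forall>z\<in>ball 0 1. wt z powr 1 * point_eval_norm 1 z * cmod (deriv g z) \<le> C" by blast
qed


theorem corollary2p3:
  fixes g :: "complex \<Rightarrow> complex" and \<beta> \<gamma> :: real
  assumes hg: "g holomorphic_on ball 0 1" and b: "\<beta> > 0" and c: "\<gamma> > 0"
  shows
   "(bounded_op (growth_space \<gamma>) (growth_norm \<gamma>) (growth_space \<beta>) (growth_norm \<beta>) (C_op g)
       \<longleftrightarrow> bounded_op (growth_space \<gamma>) (growth_norm \<gamma>) (growth_space \<beta>) (growth_norm \<beta>) (T_op g))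
  \<and> (bounded_op (growth_space \<gamma>) (growth_norm \<gamma>) (growth_space \<beta>) (growth_norm \<beta>) (T_op g)
       \<longleftrightarrow> bounded_op (growth_space \<gamma>) (growth_norm \<gamma>) (growth_space (\<beta>+1)) (growth_norm (\<beta>+1)) (M_op g))
  \<and> (bounded_op (growth_space \<gamma>) (growth_norm \<gamma>) (growth_space (\<beta>+1)) (growth_norm (\<beta>+1)) (M_op g)
       \<longleftrightarrow> (\<exists>C. \<forall>z\<in>ball 0 1. (1 - (cmod z)^2) powr (\<beta> + 1 - \<gamma>) * cmod (deriv g z) \<le> C))
  \<and> (\<gamma> = \<beta> \<longrightarrow>
       ((\<exists>C. \<forall>z\<in>ball 0 1. (1 - (cmod z)^2) powr (\<beta> + 1 - \<gamma>) * cmod (deriv g z) \<le> C)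
         \<longleftrightarrow> g \<in> bloch))
  \<and> (bounded_op (bloch_type \<gamma>) (bloch_norm \<gamma>) (bloch_type \<beta>) (bloch_norm \<beta>) (C_op g)
       \<longleftrightarrow> bounded_op (bloch_type \<gamma>) (bloch_norm \<gamma>) (bloch_type \<beta>) (bloch_norm \<beta>) (T_op g))
  \<and> (bounded_op (bloch_type \<gamma>) (bloch_norm \<gamma>) (bloch_type \<beta>) (bloch_norm \<beta>) (T_op g)
       \<longleftrightarrow> bounded_op (bloch_type \<gamma>) (bloch_norm \<gamma>) (growth_space \<beta>) (growth_norm \<beta>) (M_op g))
  \<and> (bounded_op (bloch_type \<gamma>) (bloch_norm \<gamma>) (growth_space \<beta>) (growth_norm \<beta>) (M_op g)
       \<longleftrightarrow> (\<exists>C. \<forall>z\<in>ball 0 1. (1 - (cmod z)^2) powr \<beta> * point_eval_norm \<gamma> z * cmod (deriv g z) \<le> C))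
  \<and> (\<gamma> = \<beta> \<longrightarrow>
       ((\<exists>C. \<forall>z\<in>ball 0 1. (1 - (cmod z)^2) powr \<beta> * point_eval_norm \<gamma> z * cmod (deriv g z) \<le> C)
         \<longleftrightarrow> (if \<beta> < 1 then g \<in> bloch_type \<beta> else if \<beta> = 1 then g \<in> log_bloch else g \<in> bloch)))"
proof -
  have hol_gs: "\<And>f. f \<in> growth_space \<gamma> \<Longrightarrow> f holomorphic_on ball 0 1" by (rule gs_hol)
  have hol_bt: "\<And>f. f \<in> bloch_type \<gamma> \<Longrightarrow> f holomorphic_on ball 0 1" by (rule bt_hol)
  have A4: "0 \<le> 2 + 2 * 4 powr (\<beta> + 1)" by simp
  have A5: "0 \<le> 5 + 2 * 4 powr (\<beta> + 1)" by simp
  have c1: "bounded_op (growth_space \<gamma>) (growth_norm \<gamma>) (growth_space \<beta>) (growth_norm \<beta>) (C_op g)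
       \<longleftrightarrow> bounded_op (growth_space \<gamma>) (growth_norm \<gamma>) (growth_space \<beta>) (growth_norm \<beta>) (T_op g)"
  proof
    assume "bounded_op (growth_space \<gamma>) (growth_norm \<gamma>) (growth_space \<beta>) (growth_norm \<beta>) (C_op g)"
    then show "bounded_op (growth_space \<gamma>) (growth_norm \<gamma>) (growth_space \<beta>) (growth_norm \<beta>) (T_op g)"
      by (rule bo_mono[where A=1]) (auto dest: growthC_to_T[OF hol_gs hg])
  next
    assume "bounded_op (growth_space \<gamma>) (growth_norm \<gamma>) (growth_space \<beta>) (growth_norm \<beta>) (T_op g)"
    then show "bounded_op (growth_space \<gamma>) (growth_norm \<gamma>) (growth_space \<beta>) (growth_norm \<beta>) (C_op g)"
      by (rule bo_mono[OF _ A4]) (auto dest: growthT_to_C[OF hol_gs hg b])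
  qed
  have c2: "bounded_op (growth_space \<gamma>) (growth_norm \<gamma>) (growth_space \<beta>) (growth_norm \<beta>) (T_op g)
       \<longleftrightarrow> bounded_op (growth_space \<gamma>) (growth_norm \<gamma>) (growth_space (\<beta>+1)) (growth_norm (\<beta>+1)) (M_op g)"
  proof
    assume "bounded_op (growth_space \<gamma>) (growth_norm \<gamma>) (growth_space \<beta>) (growth_norm \<beta>) (T_op g)"
    then show "bounded_op (growth_space \<gamma>) (growth_norm \<gamma>) (growth_space (\<beta>+1)) (growth_norm (\<beta>+1)) (M_op g)"
      by (rule bo_mono[where A="4 powr (\<beta> + 1)"]) (auto dest: growthT_to_M[OF hol_gs hg b])
  next
    assume "bounded_op (growth_space \<gamma>) (growth_norm \<gamma>) (growth_space (\<beta>+1)) (growth_norm (\<beta>+1)) (M_op g)"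
    then show "bounded_op (growth_space \<gamma>) (growth_norm \<gamma>) (growth_space \<beta>) (growth_norm \<beta>) (T_op g)"
      by (rule bo_mono[where A="2 powr \<beta> / \<beta>"]) (use b in \<open>auto dest: growthM_to_T[OF hol_gs hg b]\<close>)
  qed
  have c3: "bounded_op (growth_space \<gamma>) (growth_norm \<gamma>) (growth_space (\<beta>+1)) (growth_norm (\<beta>+1)) (M_op g)
       \<longleftrightarrow> (\<exists>C. \<forall>z\<in>ball 0 1. (1 - (cmod z)^2) powr (\<beta> + 1 - \<gamma>) * cmod (deriv g z) \<le> C)"
    by (rule part3[OF hg b c])
  have c4: "\<gamma> = \<beta> \<longrightarrow>
       ((\<exists>C. \<forall>z\<in>ball 0 1. (1 - (cmod z)^2) powr (\<beta> + 1 - \<gamma>) * cmod (deriv g z) \<le> C)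
         \<longleftrightarrow> g \<in> bloch)"
    using hg by (simp add: bloch_def bloch_type_def)
  have c5: "bounded_op (bloch_type \<gamma>) (bloch_norm \<gamma>) (bloch_type \<beta>) (bloch_norm \<beta>) (C_op g)
       \<longleftrightarrow> bounded_op (bloch_type \<gamma>) (bloch_norm \<gamma>) (bloch_type \<beta>) (bloch_norm \<beta>) (T_op g)"
  proof
    assume "bounded_op (bloch_type \<gamma>) (bloch_norm \<gamma>) (bloch_type \<beta>) (bloch_norm \<beta>) (C_op g)"
    then show "bounded_op (bloch_type \<gamma>) (bloch_norm \<gamma>) (bloch_type \<beta>) (bloch_norm \<beta>) (T_op g)"
      by (rule bo_mono[where A=2]) (auto dest: blochC_to_T[OF hol_bt hg b])
  next
    assume "bounded_op (bloch_type \<gamma>) (bloch_norm \<gamma>) (bloch_type \<beta>) (bloch_norm \<beta>) (T_op g)"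
    then show "bounded_op (bloch_type \<gamma>) (bloch_norm \<gamma>) (bloch_type \<beta>) (bloch_norm \<beta>) (C_op g)"
      by (rule bo_mono[OF _ A5]) (auto dest: blochT_to_C[OF hol_bt hg b])
  qed
  have c6: "bounded_op (bloch_type \<gamma>) (bloch_norm \<gamma>) (bloch_type \<beta>) (bloch_norm \<beta>) (T_op g)
       \<longleftrightarrow> bounded_op (bloch_type \<gamma>) (bloch_norm \<gamma>) (growth_space \<beta>) (growth_norm \<beta>) (M_op g)"
  proof
    assume "bounded_op (bloch_type \<gamma>) (bloch_norm \<gamma>) (bloch_type \<beta>) (bloch_norm \<beta>) (T_op g)"
    then show "bounded_op (bloch_type \<gamma>) (bloch_norm \<gamma>) (growth_space \<beta>) (growth_norm \<beta>) (M_op g)"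
    proof (rule bo_mono[where A=1])
      fix f assume f: "f \<in> bloch_type \<gamma>" "T_op g f \<in> bloch_type \<beta>"
      from blochT_M[OF hol_bt[OF f(1)] hg, of \<beta>] f(2)
      show "M_op g f \<in> growth_space \<beta> \<and> growth_norm \<beta> (M_op g f) \<le> 1 * bloch_norm \<beta> (T_op g f)" by simp
    qed simp
  next
    assume "bounded_op (bloch_type \<gamma>) (bloch_norm \<gamma>) (growth_space \<beta>) (growth_norm \<beta>) (M_op g)"
    then show "bounded_op (bloch_type \<gamma>) (bloch_norm \<gamma>) (bloch_type \<beta>) (bloch_norm \<beta>) (T_op g)"
    proof (rule bo_mono[where A=1])
      fix f assume f: "f \<in> bloch_type \<gamma>" "M_op g f \<in> growth_space \<beta>"
      from blochT_M[OF hol_bt[OF f(1)] hg, of \<beta>] f(2)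
      show "T_op g f \<in> bloch_type \<beta> \<and> bloch_norm \<beta> (T_op g f) \<le> 1 * growth_norm \<beta> (M_op g f)" by simp
    qed simp
  qed
  have c7: "bounded_op (bloch_type \<gamma>) (bloch_norm \<gamma>) (growth_space \<beta>) (growth_norm \<beta>) (M_op g)
       \<longleftrightarrow> (\<exists>C. \<forall>z\<in>ball 0 1. (1 - (cmod z)^2) powr \<beta> * point_eval_norm \<gamma> z * cmod (deriv g z) \<le> C)"
    by (rule part7[OF hg b c])
  have c8: "\<gamma> = \<beta> \<longrightarrow>
       ((\<exists>C. \<forall>z\<in>ball 0 1. (1 - (cmod z)^2) powr \<beta> * point_eval_norm \<gamma> z * cmod (deriv g z) \<le> C)
         \<longleftrightarrow> (if \<beta> < 1 then g \<in> bloch_type \<beta> else if \<beta> = 1 then g \<in> log_bloch else g \<in> bloch))"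
  proof
    assume e: "\<gamma> = \<beta>"
    consider "\<beta> < 1" | "\<beta> = 1" | "\<beta> > 1" by linarith
    then show "(\<exists>C. \<forall>z\<in>ball 0 1. (1 - (cmod z)^2) powr \<beta> * point_eval_norm \<gamma> z * cmod (deriv g z) \<le> C)
         \<longleftrightarrow> (if \<beta> < 1 then g \<in> bloch_type \<beta> else if \<beta> = 1 then g \<in> log_bloch else g \<in> bloch)"
    proof cases
      case 1 then show ?thesis using part8_lt1[OF hg b 1] e by simp
    next
      case 2 then show ?thesis using part8_eq1[OF hg] e by simp
    next
      case 3 then show ?thesis using part8_gt1[OF hg 3] e by simp
    qed
  qed
  show ?thesis using c1 c2 c3 c4 c5 c6 c7 c8 by blast
qed

end
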